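(* Let $F$ be an infinite field of characteristic $p>2$ and let $E^{can}$ be the Grassmann algebra $E$ with the $\mathbb{Z}$-grading in which every generator $e_i$ has degree $1$. Then every $\mathbb{Z}$-graded polynomial identity of $E^{can}$ is a consequence of (i.e. lies in the $T_{\mathbb{Z}}$-ideal generated by) the following graded polynomials: $x$ for every variable with $\alpha(x)<0$; $[x_1,x_2]$ whenever $\alpha(x_1)$ or $\alpha(x_2)$ is even; $x_1x_2+x_2x_1$ whenever $\alpha(x_1)$ and $\alpha(x_2)$ are both odd; and $x^p$ for every variable $x$ with $\alpha(x)\ge 1$ even.
   Context: $L$ is a vector space over $F$ with basis $e_1,e_2,\dots$, and $E$ is the unital Grassmann algebra of $L$: basis $1$ and $e_{i_1}\cdots e_{i_k}$ ($i_1<\cdots<i_k$), with $e_ie_j=-e_je_i$. In $E^{can}$ the homogeneous component of degree $n\ge1$ is spanned by basis monomials of length $n$, degree $0$ component is $F$, negative components are $0$. $F\langle X|\mathbb{Z}\rangle$ is the free unital associative algebra on $X=\bigcup_{i\in\mathbb{Z}}X_i$, each $X_i$ a countably infinite set of variables of degree $i$; $\alpha(x)$ is the degree of $x$. A polynomial $f(x_1,\dots,x_r)$ is a $\mathbb{Z}$-graded identity of a $\mathbb{Z}$-graded algebra $A$ if $f(a_1,\dots,a_r)=0$ for all $a_j\in A_{\alpha(x_j)}$. A $T_{\mathbb{Z}}$-ideal is an ideal of $F\langle X|\mathbb{Z}\rangle$ invariant under all degree-preserving endomorphisms. $[a,b]=ab-ba$. *)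

theory Defs
  imports Main "HOL-Computational_Algebra.Primes"
begin

text \<open>A variable is a pair (i, n): the n-th variable of degree i.  Hence
  X_i = {(i,n) | n} is countably infinite and X is the union of all X_i.\<close>
type_synonym var = "int \<times> nat"

definition alpha :: "var \<Rightarrow> int" where
  "alpha x = fst x"

text \<open>A noncommutative polynomial is a finitely supported coefficient function
  on words (lists of variables); the empty word is the monomial 1.\<close>
type_synonym 'a fpoly = "var list \<Rightarrow> 'a"

definition fpoly :: "'a::field fpoly \<Rightarrow> bool" where
  "fpoly f \<longleftrightarrow> finite {w. f w \<noteq> 0}"

definition padd :: "'a::field fpoly \<Rightarrow> 'a fpoly \<Rightarrow> 'a fpoly" where
  "padd f g = (\<lambda>w. f w + g w)"

definition pneg :: "'a::field fpoly \<Rightarrow> 'a fpoly" where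
  "pneg f = (\<lambda>w. - f w)"

definition psub :: "'a::field fpoly \<Rightarrow> 'a fpoly \<Rightarrow> 'a fpoly" where
  "psub f g = (\<lambda>w. f w - g w)"

definition psmult :: "'a::field \<Rightarrow> 'a fpoly \<Rightarrow> 'a fpoly" where
  "psmult c f = (\<lambda>w. c * f w)"

definition pzero :: "'a::field fpoly" where
  "pzero = (\<lambda>w. 0)"

definition pone :: "'a::field fpoly" where
  "pone = (\<lambda>w. if w = [] then 1 else 0)"

definition pvar :: "var \<Rightarrow> 'a::field fpoly" where
  "pvar x = (\<lambda>w. if w = [x] then 1 else 0)"

definition pmul :: "'a::field fpoly \<Rightarrow> 'a fpoly \<Rightarrow> 'a fpoly" where
  "pmul f g = (\<lambda>w. \<Sum>i\<le>length w. f (take i w) * g (drop i w))"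

definition ppow :: "'a::field fpoly \<Rightarrow> nat \<Rightarrow> 'a fpoly" where
  "ppow f n = ((\<lambda>h. pmul f h) ^^ n) pone"

definition pcomm :: "'a::field fpoly \<Rightarrow> 'a fpoly \<Rightarrow> 'a fpoly" where
  "pcomm f g = psub (pmul f g) (pmul g f)"

definition word_deg :: "var list \<Rightarrow> int" where
  "word_deg w = sum_list (map alpha w)"

definition homog :: "int \<Rightarrow> 'a::field fpoly \<Rightarrow> bool" where
  "homog i f \<longleftrightarrow> fpoly f \<and> (\<forall>w. f w \<noteq> 0 \<longrightarrow> word_deg w = i)"

definition graded_endo :: "('a::field fpoly \<Rightarrow> 'a fpoly) \<Rightarrow> bool" where
  "graded_endo h \<longleftrightarrow>
     (\<forall>f. fpoly f \<longrightarrow> fpoly (h f)) \<and>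
     (\<forall>f g. fpoly f \<longrightarrow> fpoly g \<longrightarrow> h (padd f g) = padd (h f) (h g)) \<and>
     (\<forall>c f. fpoly f \<longrightarrow> h (psmult c f) = psmult c (h f)) \<and>
     (\<forall>f g. fpoly f \<longrightarrow> fpoly g \<longrightarrow> h (pmul f g) = pmul (h f) (h g)) \<and>
     h pone = pone \<and>
     (\<forall>i f. homog i f \<longrightarrow> homog i (h f))"

definition pideal :: "'a::field fpoly set \<Rightarrow> bool" where
  "pideal I \<longleftrightarrow>
     I \<subseteq> {f. fpoly f} \<and> pzero \<in> I \<and>
     (\<forall>f\<in>I. \<forall>g\<in>I. padd f g \<in> I) \<and>
     (\<forall>c. \<forall>f\<in>I. psmult c f \<in> I) \<and>
     (\<forall>f\<in>I. \<forall>g. fpoly g \<longrightarrow> pmul g f \<in> I \<and> pmul f g \<in> I)"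

definition TZ_ideal :: "'a::field fpoly set \<Rightarrow> bool" where
  "TZ_ideal I \<longleftrightarrow> pideal I \<and> (\<forall>h. graded_endo h \<longrightarrow> (\<forall>f\<in>I. h f \<in> I))"

definition TZ_gen :: "'a::field fpoly set \<Rightarrow> 'a fpoly set" where
  "TZ_gen S = \<Inter> {I. TZ_ideal I \<and> S \<subseteq> I}"

text \<open>An element of E is a finitely supported coefficient function on finite
  sets S of indices; S = {i1 < ... < ik} stands for the basis monomial
  e_i1 ... e_ik (the empty set stands for 1).  Indices run over nat (a harmless
  relabelling of e_1, e_2, ...).\<close>
type_synonym 'a grass = "nat set \<Rightarrow> 'a"

definition grass :: "'a::field grass \<Rightarrow> bool" where
  "grass a \<longleftrightarrow> finite {S. a S \<noteq> 0} \<and> (\<forall>S. a S \<noteq> 0 \<longrightarrow> finite S)"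

text \<open>Sign of e_S e_T = sign * e_(S \<union> T) for disjoint S, T.\<close>
definition gsign :: "nat set \<Rightarrow> nat set \<Rightarrow> int" where
  "gsign S T = (-1) ^ card {(s, t). s \<in> S \<and> t \<in> T \<and> t < s}"

definition gmul :: "'a::field grass \<Rightarrow> 'a grass \<Rightarrow> 'a grass" where
  "gmul a b = (\<lambda>U. if finite U then
       (\<Sum>S\<in>Pow U. of_int (gsign S (U - S)) * a S * b (U - S)) else 0)"

definition gone :: "'a::field grass" where
  "gone = (\<lambda>S. if S = {} then 1 else 0)"

definition gzero :: "'a::field grass" where
  "gzero = (\<lambda>S. 0)"

definition Ecan_comp :: "int \<Rightarrow> 'a::field grass set" where
  "Ecan_comp n = (if n < 0 then {gzero}
     else {a. grass a \<and> (\<forall>S. a S \<noteq> 0 \<longrightarrow> card S = nat n)})"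

fun gprod :: "'a::field grass list \<Rightarrow> 'a grass" where
  "gprod [] = gone"
| "gprod (a # as) = gmul a (gprod as)"

definition peval :: "(var \<Rightarrow> 'a::field grass) \<Rightarrow> 'a fpoly \<Rightarrow> 'a grass" where
  "peval \<phi> f = (\<lambda>U. \<Sum>w\<in>{w. f w \<noteq> 0}. f w * gprod (map \<phi> w) U)"

definition Ecan_identity :: "'a::field fpoly \<Rightarrow> bool" where
  "Ecan_identity f \<longleftrightarrow> fpoly f \<and>
     (\<forall>\<phi>. (\<forall>x. \<phi> x \<in> Ecan_comp (alpha x)) \<longrightarrow> peval \<phi> f = gzero)"

definition Ecan_gens :: "nat \<Rightarrow> 'a::field fpoly set" where
  "Ecan_gens p =
     {pvar x | x. alpha x < 0} \<union>
     {pcomm (pvar x1) (pvar x2) | x1 x2. x1 \<noteq> x2 \<and> (even (alpha x1) \<or> even (alpha x2))} \<union>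
     {padd (pmul (pvar x1) (pvar x2)) (pmul (pvar x2) (pvar x1)) | x1 x2.
        x1 \<noteq> x2 \<and> odd (alpha x1) \<and> odd (alpha x2)} \<union>
     {ppow (pvar x) p | x. alpha x \<ge> 1 \<and> even (alpha x)}"

end

theory Submission
  imports Defs "HOL-Library.Countable" "HOL-Library.Product_Lexorder"
    "HOL-Computational_Algebra.Polynomial" "HOL-Library.Function_Algebras"
begin


section \<open>Signs\<close>

definition ginv :: "nat set \<Rightarrow> nat set \<Rightarrow> (nat \<times> nat) set" where
  "ginv S T = {(s, t). s \<in> S \<and> t \<in> T \<and> t < s}"

lemma gsign_ginv: "gsign S T = (-1) ^ card (ginv S T)"
  by (simp add: gsign_def ginv_def)

lemma finite_ginv: "finite S \<Longrightarrow> finite T \<Longrightarrow> finite (ginv S T)"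
  by (rule finite_subset[of _ "S \<times> T"]) (auto simp: ginv_def)

lemma gsign_Un_left:
  assumes "finite A" "finite B" "finite C" "A \<inter> B = {}"
  shows "gsign (A \<union> B) C = gsign A C * gsign B C"
proof -
  have e: "ginv (A \<union> B) C = ginv A C \<union> ginv B C" by (auto simp: ginv_def)
  have d: "ginv A C \<inter> ginv B C = {}" using assms(4) by (auto simp: ginv_def)
  show ?thesis unfolding gsign_ginv e
    by (simp add: card_Un_disjoint[OF finite_ginv finite_ginv d] assms power_add)
qed

lemma gsign_Un_right:
  assumes "finite A" "finite B" "finite C" "B \<inter> C = {}"
  shows "gsign A (B \<union> C) = gsign A B * gsign A C"
proof -
  have e: "ginv A (B \<union> C) = ginv A B \<union> ginv A C" by (auto simp: ginv_def)
  have d: "ginv A B \<inter> ginv A C = {}" using assms(4) by (auto simp: ginv_def)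
  show ?thesis unfolding gsign_ginv e
    by (simp add: card_Un_disjoint[OF finite_ginv finite_ginv d] assms power_add)
qed

lemma gsign_empty1[simp]: "gsign {} T = 1" by (simp add: gsign_def)
lemma gsign_empty2[simp]: "gsign S {} = 1" by (simp add: gsign_def)

lemma gsign_swap:
  assumes "finite S" "finite T" "S \<inter> T = {}"
  shows "gsign S T * gsign T S = (-1) ^ (card S * card T)"
proof -
  have e: "ginv S T \<union> prod.swap ` ginv T S = S \<times> T"
    using assms(3) by (auto simp: ginv_def image_iff)
  have d: "ginv S T \<inter> prod.swap ` ginv T S = {}" by (auto simp: ginv_def)
  have c: "card (prod.swap ` ginv T S) = card (ginv T S)"
    by (rule card_image) (metis inj_on_def swap_swap)
  have "card (ginv S T) + card (ginv T S) = card S * card T"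
    using card_Un_disjoint[OF finite_ginv[OF assms(1,2)] finite_imageI[OF finite_ginv[OF assms(2,1)]] d]
    by (simp add: e c card_cartesian_product)
  then show ?thesis by (simp add: gsign_ginv power_add[symmetric])
qed

lemma gmul_assoc: "gmul (gmul a b) c = gmul a (gmul b c)"
proof (rule ext)
  fix U :: "nat set"
  show "gmul (gmul a b) c U = gmul a (gmul b c) U"
  proof (cases "finite U")
    case False then show ?thesis by (simp add: gmul_def)
  next
    case fin: True
    define g where "g R T = of_int (gsign R T * gsign R (U - R - T) * gsign T (U - R - T)) * a R * b T * c (U - R - T)" for R T
    have L: "gmul (gmul a b) c U = (\<Sum>R\<in>Pow U. \<Sum>T\<in>Pow (U - R). g R T)"
    proof -
      have "gmul (gmul a b) c U = (\<Sum>S\<in>Pow U. \<Sum>R\<in>Pow S. of_int (gsign S (U - S)) * (of_int (gsign R (S - R)) * a R * b (S - R)) * c (U - S))"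
        using fin by (simp add: gmul_def sum_distrib_left sum_distrib_right finite_subset)
      also have "\<dots> = (\<Sum>S\<in>Pow U. \<Sum>R\<in>Pow U. if R \<subseteq> S then of_int (gsign S (U - S)) * (of_int (gsign R (S - R)) * a R * b (S - R)) * c (U - S) else 0)"
      proof (rule sum.cong[OF refl])
        fix S assume "S \<in> Pow U"
        then show "(\<Sum>R\<in>Pow S. of_int (gsign S (U - S)) * (of_int (gsign R (S - R)) * a R * b (S - R)) * c (U - S)) = (\<Sum>R\<in>Pow U. if R \<subseteq> S then of_int (gsign S (U - S)) * (of_int (gsign R (S - R)) * a R * b (S - R)) * c (U - S) else 0)"
          using fin by (simp add: sum.If_cases Int_absorb1 Pow_mono flip: Pow_def)
      qed
      also have "\<dots> = (\<Sum>R\<in>Pow U. \<Sum>S\<in>Pow U. if R \<subseteq> S then of_int (gsign S (U - S)) * (of_int (gsign R (S - R)) * a R * b (S - R)) * c (U - S) else 0)"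
        by (rule sum.swap)
      also have "\<dots> = (\<Sum>R\<in>Pow U. \<Sum>T\<in>Pow (U - R). g R T)"
      proof (rule sum.cong[OF refl])
        fix R assume R: "R \<in> Pow U"
        have "(\<Sum>S\<in>Pow U. if R \<subseteq> S then of_int (gsign S (U - S)) * (of_int (gsign R (S - R)) * a R * b (S - R)) * c (U - S) else 0)
          = (\<Sum>S\<in>{S. R \<subseteq> S \<and> S \<subseteq> U}. of_int (gsign S (U - S)) * (of_int (gsign R (S - R)) * a R * b (S - R)) * c (U - S))"
          using fin by (simp add: sum.If_cases) (rule sum.cong, auto)
        also have "\<dots> = (\<Sum>T\<in>Pow (U - R). of_int (gsign (R \<union> T) (U - (R \<union> T))) * (of_int (gsign R ((R \<union> T) - R)) * a R * b ((R \<union> T) - R)) * c (U - (R \<union> T)))"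
          by (rule sum.reindex_bij_witness[of _ "\<lambda>T. R \<union> T" "\<lambda>S. S - R"]) (use R in \<open>auto simp: Un_absorb1\<close>)
        also have "\<dots> = (\<Sum>T\<in>Pow (U - R). g R T)"
        proof (rule sum.cong[OF refl])
          fix T assume T: "T \<in> Pow (U - R)"
          have fR: "finite R" "finite T" "finite (U - R - T)"
            using R T fin by (auto intro: rev_finite_subset[of "U - R"] rev_finite_subset[of U])
          have e1: "(R \<union> T) - R = T" "U - (R \<union> T) = U - R - T" using T by auto
          have "gsign (R \<union> T) (U - R - T) = gsign R (U - R - T) * gsign T (U - R - T)"
            by (rule gsign_Un_left) (use fR T in auto)
          then show "of_int (gsign (R \<union> T) (U - (R \<union> T))) * (of_int (gsign R ((R \<union> T) - R)) * a R * b ((R \<union> T) - R)) * c (U - (R \<union> T)) = g R T"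
            unfolding e1 g_def by (simp add: algebra_simps)
        qed
        finally show "(\<Sum>S\<in>Pow U. if R \<subseteq> S then of_int (gsign S (U - S)) * (of_int (gsign R (S - R)) * a R * b (S - R)) * c (U - S) else 0) = (\<Sum>T\<in>Pow (U - R). g R T)" .
      qed
      finally show ?thesis .
    qed
    have R: "gmul a (gmul b c) U = (\<Sum>R\<in>Pow U. \<Sum>T\<in>Pow (U - R). g R T)"
    proof -
      have "gmul a (gmul b c) U = (\<Sum>R\<in>Pow U. of_int (gsign R (U - R)) * a R * (\<Sum>T\<in>Pow (U - R). of_int (gsign T (U - R - T)) * b T * c (U - R - T)))"
        using fin by (simp add: gmul_def)
      also have "\<dots> = (\<Sum>R\<in>Pow U. \<Sum>T\<in>Pow (U - R). g R T)"
      proof (rule sum.cong[OF refl])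
        fix R assume R: "R \<in> Pow U"
        show "of_int (gsign R (U - R)) * a R * (\<Sum>T\<in>Pow (U - R). of_int (gsign T (U - R - T)) * b T * c (U - R - T)) = (\<Sum>T\<in>Pow (U - R). g R T)"
          unfolding sum_distrib_left
        proof (rule sum.cong[OF refl])
          fix T assume T: "T \<in> Pow (U - R)"
          have fR: "finite R" "finite T" "finite (U - R - T)"
            using R T fin by (auto intro: rev_finite_subset[of "U - R"] rev_finite_subset[of U])
          have e: "U - R = T \<union> (U - R - T)" using T by auto
          have "gsign R (U - R) = gsign R T * gsign R (U - R - T)"
            by (subst e, rule gsign_Un_right) (use fR in auto)
          then show "of_int (gsign R (U - R)) * a R * (of_int (gsign T (U - R - T)) * b T * c (U - R - T)) = g R T"
            unfolding g_def by (simp add: algebra_simps)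
        qed
      qed
      finally show ?thesis .
    qed
    show ?thesis using L R by simp
  qed
qed


lemma gmul_distL: "gmul a (\<lambda>S. b S + c S) = (\<lambda>S. gmul a b S + gmul a c S)"
  by (rule ext) (simp add: gmul_def algebra_simps sum.distrib)

lemma gmul_distR: "gmul (\<lambda>S. a S + b S) c = (\<lambda>S. gmul a c S + gmul b c S)"
  by (rule ext) (simp add: gmul_def algebra_simps sum.distrib)

lemma gmul_one_left: "(\<forall>S. infinite S \<longrightarrow> a S = 0) \<Longrightarrow> gmul gone a = a"
proof (rule ext)
  fix U assume a: "\<forall>S. infinite S \<longrightarrow> a S = 0"
  show "gmul gone a U = a U"
  proof (cases "finite U")
    case True
    have "gmul gone a U = (\<Sum>S\<in>Pow U. if S = {} then a U else 0)"
      unfolding gmul_def gone_def if_P[OF True] by (intro sum.cong) (auto simp: Diff_eq_empty_iff)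
    also have "\<dots> = a U" using True by simp
    finally show ?thesis .
  qed (simp add: gmul_def a)
qed

lemma gmul_one_right: "(\<forall>S. infinite S \<longrightarrow> a S = 0) \<Longrightarrow> gmul a gone = a"
proof (rule ext)
  fix U assume a: "\<forall>S. infinite S \<longrightarrow> a S = 0"
  show "gmul a gone U = a U"
  proof (cases "finite U")
    case True
    have "gmul a gone U = (\<Sum>S\<in>Pow U. if S = U then a U else 0)"
      unfolding gmul_def gone_def if_P[OF True] by (intro sum.cong) (auto simp: Diff_eq_empty_iff)
    also have "\<dots> = a U" using True by simp
    finally show ?thesis .
  qed (simp add: gmul_def a)
qed

typedef (overloaded) 'a ex = "{a :: 'a::field grass. \<forall>S. infinite S \<longrightarrow> a S = 0}"
  by (rule exI[of _ "\<lambda>S. 0"]) auto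

setup_lifting type_definition_ex

instantiation ex :: (field) ring_1
begin
lift_definition zero_ex :: "'a ex" is "\<lambda>S. 0" by simp
lift_definition one_ex :: "'a ex" is gone by (auto simp: gone_def)
lift_definition plus_ex :: "'a ex \<Rightarrow> 'a ex \<Rightarrow> 'a ex" is "\<lambda>a b S. a S + b S" by simp
lift_definition uminus_ex :: "'a ex \<Rightarrow> 'a ex" is "\<lambda>a S. - a S" by simp
lift_definition minus_ex :: "'a ex \<Rightarrow> 'a ex \<Rightarrow> 'a ex" is "\<lambda>a b S. a S - b S" by simp
lift_definition times_ex :: "'a ex \<Rightarrow> 'a ex \<Rightarrow> 'a ex" is gmul by (simp add: gmul_def)
instance
proof
  fix a b c :: "'a ex"
  show "a * b * c = a * (b * c)" by transfer (rule gmul_assoc)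
  show "1 * a = a" by transfer (rule gmul_one_left)
  show "a * 1 = a" by transfer (rule gmul_one_right)
  show "(a + b) * c = a * c + b * c" by transfer (rule gmul_distR)
  show "a * (b + c) = a * b + a * c" by transfer (rule gmul_distL)
  show "a + b + c = a + (b + c)" by transfer (simp add: add.assoc)
  show "a + b = b + a" by transfer (simp add: add.commute)
  show "0 + a = a" by transfer simp
  show "- a + a = 0" by transfer simp
  show "a - b = a + - b" by transfer simp
  show "(0::'a ex) \<noteq> 1" by transfer (simp add: gone_def fun_eq_iff)
qed
end


lemma pow_comm:
  fixes a b :: "'r::ring_1"
  assumes "b * a = a * b" shows "b * a ^ n = a ^ n * b"
proof (induction n)
  case (Suc n)
  have "b * a ^ Suc n = (b * a) * a ^ n" by (simp add: mult.assoc)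
  also have "\<dots> = a * (b * a ^ n)" using assms by (simp add: mult.assoc)
  also have "\<dots> = a ^ Suc n * b" using Suc by (simp add: mult.assoc)
  finally show ?case .
qed simp

lemma GL:
  fixes a b :: "'r::ring_1"
  assumes ab: "a * b = b * a" and bb: "b * b = 0"
  shows "(a + b) ^ Suc n = a ^ Suc n + of_nat (Suc n) * a ^ n * b"
proof (induction n)
  case 0 then show ?case by simp
next
  case (Suc n)
  have c1: "b * a ^ n = a ^ n * b" using pow_comm ab by metis
  have c2: "b * a ^ Suc n = a ^ Suc n * b" using pow_comm ab by metis
  have lc: "x * (of_nat k * z) = of_nat k * (x * z)" for x z :: 'r and k
    by (metis mult.assoc mult_of_nat_commute)
  have "(a + b) ^ Suc (Suc n) = (a + b) * (a ^ Suc n + of_nat (Suc n) * a ^ n * b)"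
    using Suc by simp
  also have "\<dots> = a ^ Suc (Suc n) + of_nat (Suc n) * a ^ Suc n * b + b * a ^ Suc n
      + of_nat (Suc n) * (b * a ^ n) * b"
    by (simp add: algebra_simps lc)
  also have "of_nat (Suc n) * (b * a ^ n) * b = of_nat (Suc n) * a ^ n * (b * b)"
    by (simp add: c1 mult.assoc)
  also have "b * a ^ Suc n = a ^ Suc n * b" by (rule c2)
  finally show ?case using bb by (simp add: algebra_simps)
qed

lemma comm_sum:
  fixes b :: "'r::ring_1"
  assumes "\<And>x. x \<in> F \<Longrightarrow> m x * b = b * m x"
  shows "sum m F * b = b * sum m F"
  using assms by (induction F rule: infinite_finite_induct) (auto simp: algebra_simps)

lemma sum_pow_zero:
  fixes m :: "'i \<Rightarrow> 'r::ring_1"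
  assumes "finite F" "\<And>x y. x \<in> F \<Longrightarrow> y \<in> F \<Longrightarrow> m x * m y = m y * m x"
    "\<And>x. x \<in> F \<Longrightarrow> m x * m x = 0" "of_nat p = (0::'r)" "p > 0"
  shows "(sum m F) ^ p = 0"
  using assms
proof (induction F rule: finite_induct)
  case empty then show ?case by (simp add: power_0_left)
next
  case (insert x F)
  obtain q where q: "p = Suc q" using insert.prems by (cases p) auto
  have c: "sum m F * m x = m x * sum m F"
    by (rule comm_sum) (use insert.prems in auto)
  have "sum m (insert x F) ^ p = (sum m F + m x) ^ Suc q"
    using insert.hyps q by (simp add: add.commute)
  also have "\<dots> = sum m F ^ Suc q + of_nat (Suc q) * sum m F ^ q * m x"
    by (rule GL) (use c insert.prems in auto)
  also have "\<dots> = 0" using insert q by simp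
  finally show ?case .
qed

lemma sum_pow_fact:
  fixes m :: "nat \<Rightarrow> 'r::ring_1"
  assumes "\<And>i j. i < n \<Longrightarrow> j < n \<Longrightarrow> m i * m j = m j * m i"
    "\<And>i. i < n \<Longrightarrow> m i * m i = 0"
  shows "(\<Sum>j<n. m j) ^ n = of_nat (fact n) * prod_list (map m [0..<n])
       \<and> (\<Sum>j<n. m j) ^ Suc n = 0"
  using assms
proof (induction n)
  case 0 then show ?case by simp
next
  case (Suc n)
  have IH: "(\<Sum>j<n. m j) ^ n = of_nat (fact n) * prod_list (map m [0..<n])"
    "(\<Sum>j<n. m j) ^ Suc n = 0" using Suc by auto
  have c: "(\<Sum>j<n. m j) * m n = m n * (\<Sum>j<n. m j)"
    by (rule comm_sum) (use Suc.prems in auto)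
  have mm: "m n * m n = 0" using Suc.prems by auto
  have e: "(\<Sum>j<Suc n. m j) = (\<Sum>j<n. m j) + m n" by simp
  have A: "(\<Sum>j<Suc n. m j) ^ Suc n = of_nat (fact (Suc n)) * prod_list (map m [0..<Suc n])"
  proof -
    have "(\<Sum>j<Suc n. m j) ^ Suc n = (\<Sum>j<n. m j) ^ Suc n + of_nat (Suc n) * (\<Sum>j<n. m j) ^ n * m n"
      unfolding e by (rule GL[OF c mm])
    also have "\<dots> = of_nat (Suc n) * (of_nat (fact n) * prod_list (map m [0..<n])) * m n"
      using IH by simp
    also have "\<dots> = of_nat (Suc n * fact n) * (prod_list (map m [0..<n]) * m n)"
      by (simp only: of_nat_mult mult.assoc)
    also have "\<dots> = of_nat (fact (Suc n)) * prod_list (map m [0..<Suc n])"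
      by simp
    finally show ?thesis .
  qed
  have B: "(\<Sum>j<Suc n. m j) ^ Suc (Suc n) = 0"
  proof -
    have "(\<Sum>j<Suc n. m j) ^ Suc (Suc n) = (\<Sum>j<n. m j) ^ Suc (Suc n) + of_nat (Suc (Suc n)) * (\<Sum>j<n. m j) ^ Suc n * m n"
      unfolding e by (rule GL[OF c mm])
    also have "(\<Sum>j<n. m j) ^ Suc (Suc n) = (\<Sum>j<n. m j) * (\<Sum>j<n. m j) ^ Suc n" by simp
    finally show ?thesis using IH by simp
  qed
  show ?case using A B by simp
qed

section \<open>Grassmann lemmas\<close>

definition ehom :: "nat \<Rightarrow> 'a::field ex \<Rightarrow> bool" where
  "ehom n a \<longleftrightarrow> (\<forall>S. Rep_ex a S \<noteq> 0 \<longrightarrow> card S = n)"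

lemma Rep_ex_inf: "infinite S \<Longrightarrow> Rep_ex a S = 0"
  using Rep_ex[of a] by auto

lemma gmul_nz:
  assumes "gmul a b U \<noteq> 0"
  shows "finite U \<and> (\<exists>S. S \<subseteq> U \<and> a S \<noteq> 0 \<and> b (U - S) \<noteq> 0)"
proof -
  have f: "finite U" using assms by (auto simp: gmul_def split: if_splits)
  then have "(\<Sum>S\<in>Pow U. of_int (gsign S (U - S)) * a S * b (U - S)) \<noteq> 0" using assms by (simp add: gmul_def)
  then obtain S where "S \<in> Pow U" "of_int (gsign S (U - S)) * a S * b (U - S) \<noteq> 0"
    by (meson sum.neutral)
  then show ?thesis using f by auto
qed

lemma ehom_mult: "ehom m a \<Longrightarrow> ehom n b \<Longrightarrow> ehom (m + n) (a * b)"
  unfolding ehom_def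
proof (transfer, intro allI impI)
  fix a b :: "'a grass" and m n U
  assume a: "\<forall>S. a S \<noteq> 0 \<longrightarrow> card S = m" and b: "\<forall>S. b S \<noteq> 0 \<longrightarrow> card S = n"
    and nz: "gmul a b U \<noteq> 0"
  obtain S where S: "finite U" "S \<subseteq> U" "a S \<noteq> 0" "b (U - S) \<noteq> 0" using gmul_nz[OF nz] by auto
  have "card U = card S + card (U - S)"
  proof -
    have "finite S" using S finite_subset by blast
    then have "card (U - S) = card U - card S" using S card_Diff_subset by blast
    moreover have "card S \<le> card U" using S card_mono by blast
    ultimately show ?thesis by simp
  qed
  then show "card U = m + n" using a b S by auto
qed


lemma Rep_of_int: "Rep_ex (of_int k :: 'a::field ex) = (\<lambda>S. if S = {} then of_int k else 0)"
proof (induction k rule: int_induct[of _ 0])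
  case base then show ?case by (simp add: zero_ex.rep_eq fun_eq_iff)
next
  case (step1 i) then show ?case by (simp add: plus_ex.rep_eq one_ex.rep_eq gone_def fun_eq_iff)
next
  case (step2 i) then show ?case by (simp add: minus_ex.rep_eq one_ex.rep_eq gone_def fun_eq_iff)
qed

lemma Rep_of_int_mult: "Rep_ex (of_int k * z) = (\<lambda>S. of_int k * Rep_ex z S)"
proof -
  have "gmul (\<lambda>S. if S = {} then of_int k else 0) (Rep_ex z) = (\<lambda>S. of_int k * Rep_ex z S)"
  proof (rule ext)
    fix U show "gmul (\<lambda>S. if S = {} then of_int k else 0) (Rep_ex z) U = of_int k * Rep_ex z U"
    proof (cases "finite U")
      case True
      then show ?thesis unfolding gmul_def if_P[OF True]
        by (subst sum.remove[of _ "{}"]) (auto intro!: sum.neutral)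
    qed (simp add: gmul_def Rep_ex_inf)
  qed
  then show ?thesis by (simp add: times_ex.rep_eq Rep_of_int)
qed

lemma graded_comm:
  assumes "ehom m a" "ehom n b"
  shows "a * b = of_int ((-1) ^ (m * n)) * (b * a)"
proof -
  note sc = Rep_of_int_mult
  show ?thesis
  proof (rule Rep_ex_inject[THEN iffD1], rule ext)
    fix U
    show "Rep_ex (a * b) U = Rep_ex (of_int ((-1) ^ (m * n)) * (b * a)) U"
    proof (cases "finite U")
      case False then show ?thesis by (simp add: Rep_ex_inf)
    next
      case True
      have "Rep_ex (a * b) U = (\<Sum>S\<in>Pow U. of_int (gsign S (U - S)) * Rep_ex a S * Rep_ex b (U - S))"
        using True by (simp add: times_ex.rep_eq gmul_def)
      also have "\<dots> = (\<Sum>S\<in>Pow U. of_int ((-1) ^ (m * n)) * (of_int (gsign (U - S) (U - (U - S))) * Rep_ex b (U - S) * Rep_ex a (U - (U - S))))"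
      proof (rule sum.cong[OF refl])
        fix S assume S: "S \<in> Pow U"
        have e: "U - (U - S) = S" using S by auto
        show "of_int (gsign S (U - S)) * Rep_ex a S * Rep_ex b (U - S) = of_int ((-1) ^ (m * n)) * (of_int (gsign (U - S) (U - (U - S))) * Rep_ex b (U - S) * Rep_ex a (U - (U - S)))"
        proof (cases "Rep_ex a S \<noteq> 0 \<and> Rep_ex b (U - S) \<noteq> 0")
          case True
          have cs: "card S = m" "card (U - S) = n" using True assms by (auto simp: ehom_def)
          have fS: "finite S" "finite (U - S)" using S \<open>finite U\<close> finite_subset by auto
          have sw: "gsign S (U - S) * gsign (U - S) S = (-1) ^ (m * n)"
            using gsign_swap[OF fS] cs by auto
          have sq: "gsign (U - S) S * gsign (U - S) S = 1"
            by (simp add: gsign_def flip: power_mult_distrib)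
          have "gsign S (U - S) = (-1) ^ (m * n) * gsign (U - S) S"
            using sw sq by (metis mult.assoc mult.commute mult_1)
          then show ?thesis unfolding e by (simp add: algebra_simps)
        qed (auto simp: e)
      qed
      also have "\<dots> = of_int ((-1) ^ (m * n)) * (\<Sum>S\<in>Pow U. of_int (gsign S (U - S)) * Rep_ex b S * Rep_ex a (U - S))"
        unfolding sum_distrib_left[symmetric]
        by (rule arg_cong[where f="\<lambda>x. _ * x"], rule sum.reindex_bij_witness[of _ "\<lambda>S. U - S" "\<lambda>S. U - S"]) auto
      also have "\<dots> = Rep_ex (of_int ((-1) ^ (m * n)) * (b * a)) U"
        unfolding sc using True by (simp add: times_ex.rep_eq gmul_def)
      finally show ?thesis .
    qed
  qed
qed


lift_definition emon :: "nat set \<Rightarrow> 'a::field \<Rightarrow> 'a ex" is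
  "\<lambda>S c T. if T = S \<and> finite S then c else 0" by auto

lemma emon_mult:
  assumes "finite S" "finite T"
  shows "emon S c * emon T d = (if S \<inter> T = {} then emon (S \<union> T) (of_int (gsign S T) * c * d) else 0)"
proof (rule Rep_ex_inject[THEN iffD1], rule ext)
  fix U
  show "Rep_ex (emon S c * emon T d) U = Rep_ex (if S \<inter> T = {} then emon (S \<union> T) (of_int (gsign S T) * c * d) else 0) U"
  proof (cases "finite U")
    case False then show ?thesis by (simp add: Rep_ex_inf)
  next
    case True
    have "Rep_ex (emon S c * emon T d) U = (\<Sum>R\<in>Pow U. of_int (gsign R (U - R)) * (if R = S then c else 0) * (if U - R = T then d else 0))"
      using True assms by (simp add: times_ex.rep_eq emon.rep_eq gmul_def)
    also have "\<dots> = (\<Sum>R\<in>Pow U. if R = S then (if U - S = T then of_int (gsign S T) * c * d else 0) else 0)"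
      by (rule sum.cong) auto
    also have "\<dots> = (if S \<in> Pow U then (if U - S = T then of_int (gsign S T) * c * d else 0) else 0)"
      using True by (simp only: sum.delta finite_Pow_iff)
    also have "\<dots> = (if S \<subseteq> U \<and> U - S = T then of_int (gsign S T) * c * d else 0)"
      by auto
    also have "\<dots> = Rep_ex (if S \<inter> T = {} then emon (S \<union> T) (of_int (gsign S T) * c * d) else 0) U"
      using assms by (auto simp: emon.rep_eq zero_ex.rep_eq)
    finally show ?thesis .
  qed
qed

lemma ehom_emon: "ehom (card S) (emon S c)"
  by (simp add: ehom_def emon.rep_eq)

lemma emon_sq: "finite S \<Longrightarrow> S \<noteq> {} \<Longrightarrow> emon S c * emon S c = 0"
  by (simp add: emon_mult)

lemma emon_decomp:
  assumes "finite {S. Rep_ex a S \<noteq> 0}"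
  shows "a = (\<Sum>S\<in>{S. Rep_ex a S \<noteq> 0}. emon S (Rep_ex a S))"
proof -
  have Rs: "Rep_ex (sum f F) = (\<lambda>U. \<Sum>S\<in>F. Rep_ex (f S) U)" if "finite F" for f :: "nat set \<Rightarrow> 'a ex" and F
    using that by (induction F rule: finite_induct) (auto simp: zero_ex.rep_eq plus_ex.rep_eq)
  show ?thesis
  proof (rule Rep_ex_inject[THEN iffD1], rule ext)
    fix U
    have "(\<Sum>S\<in>{S. Rep_ex a S \<noteq> 0}. Rep_ex (emon S (Rep_ex a S)) U) = Rep_ex a U"
    proof (cases "Rep_ex a U = 0")
      case True
      then show ?thesis by (auto simp: emon.rep_eq intro!: sum.neutral)
    next
      case False
      then have fU: "finite U" using Rep_ex_inf by blast
      have "(\<Sum>S\<in>{S. Rep_ex a S \<noteq> 0}. Rep_ex (emon S (Rep_ex a S)) U) = (\<Sum>S\<in>{S. Rep_ex a S \<noteq> 0}. if U = S then Rep_ex a S else 0)"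
        using fU by (intro sum.cong) (auto simp: emon.rep_eq)
      also have "\<dots> = Rep_ex a U" using False by (simp only: sum.delta'[OF assms]) simp
      finally show ?thesis .
    qed
    then show "Rep_ex a U = Rep_ex (\<Sum>S\<in>{S. Rep_ex a S \<noteq> 0}. emon S (Rep_ex a S)) U"
      by (simp add: Rs[OF assms])
  qed
qed

lemma odd_sq_zero:
  assumes "ehom n a" "odd n" "(2::'a::field) \<noteq> 0"
  shows "a * a = (0 :: 'a ex)"
proof -
  have "a * a = of_int ((-1) ^ (n * n)) * (a * a)" by (rule graded_comm[OF assms(1,1)])
  also have "(-1::int) ^ (n * n) = -1" using assms(2) by (simp add: minus_one_power_iff)
  finally have eq: "a * a = - (a * a)" by (simp only: of_int_minus of_int_1 mult_minus1)
  have z: "Rep_ex (a * a) S = 0" for S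
  proof -
    have "Rep_ex (a * a) S = Rep_ex (- (a * a)) S" using arg_cong[OF eq, of "\<lambda>z. Rep_ex z S"] .
    also have "\<dots> = - Rep_ex (a * a) S" by (simp add: uminus_ex.rep_eq)
    finally have h: "Rep_ex (a * a) S = - Rep_ex (a * a) S" .
    have "Rep_ex (a * a) S + Rep_ex (a * a) S = 0" by (metis h add.right_inverse)
    then have "2 * Rep_ex (a * a) S = 0" by (simp only: mult_2)
    then show ?thesis using assms(3) by simp
  qed
  show ?thesis by (rule Rep_ex_inject[THEN iffD1]) (simp add: zero_ex.rep_eq fun_eq_iff z)
qed

lemma Rep_of_nat: "Rep_ex (of_nat k :: 'a::field ex) = (\<lambda>S. if S = {} then of_nat k else 0)"
  using Rep_of_int[of "int k"] by (simp only: of_int_of_nat_eq)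

lemma of_nat_ex_zero: "of_nat p = (0::'a::field) \<Longrightarrow> of_nat p = (0::'a ex)"
proof -
  assume h: "of_nat p = (0::'a)"
  have "Rep_ex (of_nat p :: 'a ex) = (\<lambda>S. 0)" using h by (simp add: Rep_of_nat fun_eq_iff)
  then show ?thesis by (intro Rep_ex_inject[THEN iffD1]) (simp add: zero_ex.rep_eq)
qed

lemma even_pow_zero:
  assumes "ehom n a" "even n" "n > 0" "finite {S. Rep_ex a S \<noteq> 0}"
    "of_nat p = (0::'a::field)" "p > 0"
  shows "a ^ p = (0 :: 'a ex)"
proof -
  let ?F = "{S. Rep_ex a S \<noteq> 0}"
  have cs: "S \<in> ?F \<Longrightarrow> card S = n" for S using assms(1) by (auto simp: ehom_def)
  have fS: "S \<in> ?F \<Longrightarrow> finite S" for S using Rep_ex_inf by blast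
  have "(\<Sum>S\<in>?F. emon S (Rep_ex a S)) ^ p = 0"
  proof (rule sum_pow_zero[OF assms(4)])
    fix x y assume "x \<in> ?F" "y \<in> ?F"
    then have "ehom n (emon x (Rep_ex a x))" "ehom n (emon y (Rep_ex a y))"
      using ehom_emon cs by metis+
    from graded_comm[OF this] show "emon x (Rep_ex a x) * emon y (Rep_ex a y) = emon y (Rep_ex a y) * emon x (Rep_ex a x)"
      using assms(2) by simp
  next
    fix x assume "x \<in> ?F"
    show "emon x (Rep_ex a x) * emon x (Rep_ex a x) = 0"
    proof (rule emon_sq)
      show "finite x" using fS \<open>x \<in> ?F\<close> .
      show "x \<noteq> {}" using cs[OF \<open>x \<in> ?F\<close>] assms(3) by auto
    qed
  qed (use of_nat_ex_zero assms(5,6) in auto)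
  then show ?thesis using emon_decomp[OF assms(4)] by simp
qed


definition wmon :: "var list \<Rightarrow> 'a::field fpoly" where
  "wmon w = (\<lambda>u. if u = w then 1 else 0)"

lemma pvar_wmon: "pvar x = wmon [x]" by (simp add: pvar_def wmon_def)
lemma pone_wmon: "pone = wmon []" by (simp add: pone_def wmon_def)

lemma fpoly_wmon: "fpoly (wmon w)"
proof -
  have "{u. wmon w u \<noteq> (0::'a)} \<subseteq> {w}" by (auto simp: wmon_def)
  then show ?thesis unfolding fpoly_def using finite_subset by blast
qed

lemma fpoly_padd: "fpoly f \<Longrightarrow> fpoly g \<Longrightarrow> fpoly (padd f g)"
  unfolding fpoly_def padd_def
  by (rule finite_subset[of _ "{w. f w \<noteq> 0} \<union> {w. g w \<noteq> 0}"]) auto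

lemma fpoly_psub: "fpoly f \<Longrightarrow> fpoly g \<Longrightarrow> fpoly (psub f g)"
  unfolding fpoly_def psub_def
  by (rule finite_subset[of _ "{w. f w \<noteq> 0} \<union> {w. g w \<noteq> 0}"]) auto

lemma fpoly_psmult: "fpoly f \<Longrightarrow> fpoly (psmult c f)"
  unfolding fpoly_def psmult_def
  by (rule finite_subset[of _ "{w. f w \<noteq> 0}"]) auto

lemma pmul_nz:
  assumes "pmul f g w \<noteq> 0"
  shows "\<exists>u v. w = u @ v \<and> f u \<noteq> 0 \<and> g v \<noteq> 0"
proof -
  from assms obtain i where "i \<le> length w" "f (take i w) * g (drop i w) \<noteq> 0"
    unfolding pmul_def by (metis (no_types, lifting) atMost_iff sum.neutral)
  then show ?thesis by (intro exI[of _ "take i w"] exI[of _ "drop i w"]) auto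
qed

lemma fpoly_pmul: "fpoly f \<Longrightarrow> fpoly g \<Longrightarrow> fpoly (pmul f g)"
  unfolding fpoly_def
proof -
  assume f: "finite {w. f w \<noteq> 0}" and g: "finite {w. g w \<noteq> 0}"
  have "{w. pmul f g w \<noteq> 0} \<subseteq> (\<lambda>(u, v). u @ v) ` ({w. f w \<noteq> 0} \<times> {w. g w \<noteq> 0})"
    using pmul_nz by fastforce
  then show "finite {w. pmul f g w \<noteq> 0}" using f g finite_subset by blast
qed

lemma pmul_wmon: "pmul (wmon u) (wmon v) = (wmon (u @ v) :: 'a::field fpoly)"
proof (rule ext)
  fix w
  have "pmul (wmon u) (wmon v) w = (\<Sum>i\<le>length w. if i = length u then (if w = u @ v then 1 else 0) else (0::'a))"
    unfolding pmul_def wmon_def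
  proof (rule sum.cong[OF refl])
    fix i assume "i \<in> {..length w}"
    then have i: "i \<le> length w" by simp
    have "(take i w = u \<and> drop i w = v) \<longleftrightarrow> (i = length u \<and> w = u @ v)"
      using i by (metis append_eq_conv_conj append_take_drop_id length_take min.absorb2)
    note iff = this
    have "(if take i w = u then 1 else 0) * (if drop i w = v then 1 else 0) = (if take i w = u \<and> drop i w = v then 1 else (0::'a))"
      by simp
    also have "\<dots> = (if i = length u \<and> w = u @ v then 1 else (0::'a))" by (simp only: iff)
    finally show "(if take i w = u then 1 else 0) * (if drop i w = v then 1 else 0) =
        (if i = length u then (if w = u @ v then 1 else 0) else (0::'a))" by simp
  qed
  also have "\<dots> = wmon (u @ v) w"
    by (simp add: sum.delta wmon_def)
  finally show "pmul (wmon u) (wmon v) w = (wmon (u @ v) w :: 'a)" .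
qed

lemma pmul_psub_right: "pmul f (psub g h) = psub (pmul f g) (pmul f h)"
  by (rule ext) (simp add: pmul_def psub_def algebra_simps sum_subtractf)

lemma pmul_psub_left: "pmul (psub f g) h = psub (pmul f h) (pmul g h)"
  by (rule ext) (simp add: pmul_def psub_def algebra_simps sum_subtractf)

lemma pmul_padd_right: "pmul f (padd g h) = padd (pmul f g) (pmul f h)"
  by (rule ext) (simp add: pmul_def padd_def algebra_simps sum.distrib)

lemma pmul_padd_left: "pmul (padd f g) h = padd (pmul f h) (pmul g h)"
  by (rule ext) (simp add: pmul_def padd_def algebra_simps sum.distrib)

lemma pmul_psmult_right: "pmul f (psmult c g) = psmult c (pmul f g)"
  by (rule ext) (simp add: pmul_def psmult_def algebra_simps sum_distrib_left)

lemma pmul_psmult_left: "pmul (psmult c f) g = psmult c (pmul f g)"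
  by (rule ext) (simp add: pmul_def psmult_def algebra_simps sum_distrib_left)

lemma ppow_Suc: "ppow f (Suc n) = pmul f (ppow f n)"
  by (simp add: ppow_def)

lemma ppow_wmon: "ppow (wmon [x]) n = (wmon (replicate n x) :: 'a::field fpoly)"
proof (induction n)
  case 0 then show ?case by (simp add: ppow_def pone_wmon)
next
  case (Suc n) then show ?case by (simp add: ppow_Suc pmul_wmon)
qed

section \<open>Ideals\<close>

lemma pideal_psub: "pideal I \<Longrightarrow> f \<in> I \<Longrightarrow> g \<in> I \<Longrightarrow> psub f g \<in> I"
proof -
  assume I: "pideal I" and f: "f \<in> I" and g: "g \<in> I"
  have "psub f g = padd f (psmult (-1) g)" by (simp add: psub_def padd_def psmult_def fun_eq_iff)
  then show ?thesis using I f g unfolding pideal_def by metis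
qed

lemma pideal_padd: "pideal I \<Longrightarrow> f \<in> I \<Longrightarrow> g \<in> I \<Longrightarrow> padd f g \<in> I"
  unfolding pideal_def by blast

lemma pideal_psmult: "pideal I \<Longrightarrow> f \<in> I \<Longrightarrow> psmult c f \<in> I"
  unfolding pideal_def by blast

lemma pideal_mulL: "pideal I \<Longrightarrow> f \<in> I \<Longrightarrow> fpoly g \<Longrightarrow> pmul g f \<in> I"
  unfolding pideal_def by blast

lemma pideal_mulR: "pideal I \<Longrightarrow> f \<in> I \<Longrightarrow> fpoly g \<Longrightarrow> pmul f g \<in> I"
  unfolding pideal_def by blast

lemma pideal_zero: "pideal I \<Longrightarrow> pzero \<in> I"
  unfolding pideal_def by blast


definition ren :: "(var \<Rightarrow> var) \<Rightarrow> 'a::field fpoly \<Rightarrow> 'a fpoly" where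
  "ren \<rho> f = (\<lambda>w. sum f {w'. map \<rho> w' = w})"

lemma finite_P:
  assumes fin: "\<And>v. finite {u. \<rho> u = v}"
  shows "finite {w'. map \<rho> w' = w}"
proof -
  have A: "finite (\<Union>v\<in>set w. {u. \<rho> u = v})" using fin by auto
  have "{w'. map \<rho> w' = w} \<subseteq> {xs. set xs \<subseteq> (\<Union>v\<in>set w. {u. \<rho> u = v}) \<and> length xs = length w}"
    by auto
  then show ?thesis using finite_lists_length_eq[OF A] finite_subset by blast
qed

lemma ren_pmul:
  assumes fin: "\<And>v. finite {u. \<rho> u = v}"
  shows "ren \<rho> (pmul f g) = pmul (ren \<rho> f) (ren \<rho> g)"
proof (rule ext)
  fix w
  have "ren \<rho> (pmul f g) w = (\<Sum>w'\<in>{w'. map \<rho> w' = w}. \<Sum>i\<le>length w. f (take i w') * g (drop i w'))"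
    unfolding ren_def pmul_def by (rule sum.cong) auto
  also have "\<dots> = (\<Sum>i\<le>length w. \<Sum>w'\<in>{w'. map \<rho> w' = w}. f (take i w') * g (drop i w'))"
    by (rule sum.swap)
  also have "\<dots> = (\<Sum>i\<le>length w. (\<Sum>u\<in>{u. map \<rho> u = take i w}. f u) * (\<Sum>v\<in>{v. map \<rho> v = drop i w}. g v))"
  proof (rule sum.cong[OF refl])
    fix i assume i: "i \<in> {..length w}"
    have "(\<Sum>u\<in>{u. map \<rho> u = take i w}. f u) * (\<Sum>v\<in>{v. map \<rho> v = drop i w}. g v)
        = (\<Sum>uv\<in>{u. map \<rho> u = take i w} \<times> {v. map \<rho> v = drop i w}. f (fst uv) * g (snd uv))"
      by (simp add: sum_product sum.cartesian_product case_prod_beta)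
    also have "\<dots> = (\<Sum>w'\<in>{w'. map \<rho> w' = w}. f (take i w') * g (drop i w'))"
    proof -
      have len: "map \<rho> u = take i w \<Longrightarrow> length u = i" for u
        using i by (metis atMost_iff length_map length_take min.absorb2)
      show ?thesis
        by (rule sum.reindex_bij_witness[of _ "\<lambda>w'. (take i w', drop i w')" "\<lambda>uv. fst uv @ snd uv"])
          (auto simp: len take_map[symmetric] drop_map[symmetric])
    qed
    finally show "(\<Sum>w'\<in>{w'. map \<rho> w' = w}. f (take i w') * g (drop i w')) = (\<Sum>u\<in>{u. map \<rho> u = take i w}. f u) * (\<Sum>v\<in>{v. map \<rho> v = drop i w}. g v)" by simp
  qed
  also have "\<dots> = pmul (ren \<rho> f) (ren \<rho> g) w" by (simp add: pmul_def ren_def)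
  finally show "ren \<rho> (pmul f g) w = pmul (ren \<rho> f) (ren \<rho> g) w" .
qed

lemma ren_wmon:
  assumes fin: "\<And>v. finite {u. \<rho> u = v}"
  shows "ren \<rho> (wmon u) = wmon (map \<rho> u)"
proof (rule ext)
  fix w
  show "ren \<rho> (wmon u) w = wmon (map \<rho> u) w"
  proof (cases "map \<rho> u = w")
    case True
    then have "ren \<rho> (wmon u) w = (\<Sum>w'\<in>{w'. map \<rho> w' = w}. if w' = u then 1 else 0)"
      by (simp add: ren_def wmon_def)
    also have "\<dots> = 1" using True finite_P[OF fin] by (simp add: sum.delta')
    finally show ?thesis using True by (simp add: wmon_def)
  next
    case False
    then show ?thesis by (auto simp: ren_def wmon_def intro!: sum.neutral)
  qed
qed

lemma ren_graded_endo:
  assumes fin: "\<And>v. finite {u. \<rho> u = v}" and deg: "\<And>u. alpha (\<rho> u) = alpha u"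
  shows "graded_endo (ren \<rho> :: 'a::field fpoly \<Rightarrow> 'a fpoly)"
proof -
  have supp: "{w. ren \<rho> f w \<noteq> 0} \<subseteq> map \<rho> ` {w. f w \<noteq> 0}" for f :: "'a fpoly"
  proof
    fix w assume "w \<in> {w. ren \<rho> f w \<noteq> 0}"
    then have "sum f {w'. map \<rho> w' = w} \<noteq> 0" by (simp add: ren_def)
    then obtain w' where "map \<rho> w' = w" "f w' \<noteq> 0" by (meson mem_Collect_eq sum.neutral)
    then show "w \<in> map \<rho> ` {w. f w \<noteq> 0}" by auto
  qed
  have fp: "fpoly f \<Longrightarrow> fpoly (ren \<rho> f)" for f :: "'a fpoly"
    unfolding fpoly_def using supp finite_subset by blast
  have wd: "word_deg (map \<rho> w) = word_deg w" for w
    by (induction w) (simp_all add: word_deg_def deg)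
  show ?thesis unfolding graded_endo_def
  proof (intro conjI allI impI)
    fix f :: "'a fpoly" assume "fpoly f" then show "fpoly (ren \<rho> f)" by (rule fp)
  next
    fix f g :: "'a fpoly"
    show "ren \<rho> (padd f g) = padd (ren \<rho> f) (ren \<rho> g)"
      by (simp add: ren_def padd_def sum.distrib fun_eq_iff)
  next
    fix c and f :: "'a fpoly"
    show "ren \<rho> (psmult c f) = psmult c (ren \<rho> f)"
      by (simp add: ren_def psmult_def sum_distrib_left fun_eq_iff)
  next
    fix f g :: "'a fpoly"
    show "ren \<rho> (pmul f g) = pmul (ren \<rho> f) (ren \<rho> g)" by (rule ren_pmul[OF fin])
  next
    show "ren \<rho> pone = (pone :: 'a fpoly)" by (simp add: pone_wmon ren_wmon[OF fin])
  next
    fix i and f :: "'a fpoly" assume h: "homog i f"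
    show "homog i (ren \<rho> f)" unfolding homog_def
    proof (intro conjI allI impI)
      show "fpoly (ren \<rho> f)" using h fp by (simp add: homog_def)
    next
      fix w assume "ren \<rho> f w \<noteq> 0"
      then obtain w' where "map \<rho> w' = w" "f w' \<noteq> 0" using supp by blast
      then show "word_deg w = i" using h wd by (auto simp: homog_def)
    qed
  qed
qed

lemma odd_sq_in:
  assumes I: "TZ_ideal I" and G: "Ecan_gens p \<subseteq> I" and x: "odd (alpha x)"
    and two: "(2::'a::field) \<noteq> 0"
  shows "(wmon [x, x] :: 'a fpoly) \<in> I"
proof -
  define y where "y = (fst x, Suc (snd x))"
  have xy: "x \<noteq> y" by (simp add: y_def prod_eq_iff)
  have ay: "alpha y = alpha x" by (simp add: y_def alpha_def)
  define \<rho> where "\<rho> = id(y := x)"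
  have fin: "finite {u. \<rho> u = v}" for v
    by (rule finite_subset[of _ "{v, y}"]) (auto simp: \<rho>_def)
  have deg: "alpha (\<rho> u) = alpha u" for u by (simp add: \<rho>_def ay)
  have "(padd (pmul (pvar x) (pvar y)) (pmul (pvar y) (pvar x)) :: 'a fpoly) \<in> {padd (pmul (pvar x1) (pvar x2)) (pmul (pvar x2) (pvar x1)) | x1 x2.
        x1 \<noteq> x2 \<and> odd (alpha x1) \<and> odd (alpha x2)}"
    using xy x ay by (intro CollectI exI[of _ x] exI[of _ y]) simp
  then have "(padd (pmul (pvar x) (pvar y)) (pmul (pvar y) (pvar x)) :: 'a fpoly) \<in> Ecan_gens p"
    unfolding Ecan_gens_def by blast
  then have g: "padd (wmon [x, y]) (wmon [y, x]) \<in> I"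
    using G by (auto simp: pvar_wmon pmul_wmon)
  have "ren \<rho> (padd (wmon [x, y]) (wmon [y, x])) \<in> I"
    using I g ren_graded_endo[OF fin deg] by (auto simp: TZ_ideal_def)
  then have "padd (wmon [x, x]) (wmon [x, x]) \<in> I"
  proof -
    have "ren \<rho> (padd (wmon [x, y]) (wmon [y, x]) :: 'a fpoly) = padd (ren \<rho> (wmon [x, y])) (ren \<rho> (wmon [y, x]))"
      by (simp add: ren_def padd_def sum.distrib fun_eq_iff)
    also have "\<dots> = padd (wmon [x, x]) (wmon [x, x])"
      using xy by (simp only: ren_wmon[OF fin]) (simp add: \<rho>_def)
    finally show ?thesis using \<open>ren \<rho> _ \<in> I\<close> by simp
  qed
  then have "psmult (1/2) (padd (wmon [x, x]) (wmon [x, x])) \<in> I"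
    using I by (simp add: TZ_ideal_def pideal_psmult)
  moreover have "psmult (1/2) (padd (wmon [x, x]) (wmon [x, x])) = (wmon [x, x] :: 'a fpoly)"
    using two by (simp add: psmult_def padd_def fun_eq_iff wmon_def)
  ultimately show ?thesis by simp
qed


definition graded :: "(var \<Rightarrow> 'a::field grass) \<Rightarrow> bool" where
  "graded \<phi> \<longleftrightarrow> (\<forall>x. \<phi> x \<in> Ecan_comp (alpha x))"

definition EE :: "(var \<Rightarrow> 'a::field grass) \<Rightarrow> var \<Rightarrow> 'a ex" where
  "EE \<phi> x = Abs_ex (\<phi> x)"

definition ev :: "(var \<Rightarrow> 'a::field grass) \<Rightarrow> var list \<Rightarrow> 'a ex" where
  "ev \<phi> w = prod_list (map (EE \<phi>) w)"

lemma Ecan_comp_inf: "a \<in> Ecan_comp n \<Longrightarrow> infinite S \<Longrightarrow> a S = 0"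
  by (auto simp: Ecan_comp_def gzero_def grass_def split: if_splits)

lemma gradedD: "graded \<phi> \<Longrightarrow> \<phi> x \<in> Ecan_comp (alpha x)"
  unfolding graded_def by blast

lemma Rep_EE: "graded \<phi> \<Longrightarrow> Rep_ex (EE \<phi> x) = \<phi> x"
  unfolding EE_def by (rule Abs_ex_inverse) (use gradedD Ecan_comp_inf in blast)

lemma Rep_ev: "graded \<phi> \<Longrightarrow> Rep_ex (ev \<phi> w) = gprod (map \<phi> w)"
  by (induction w) (simp_all add: ev_def one_ex.rep_eq times_ex.rep_eq Rep_EE)

lemma EE_neg: "graded \<phi> \<Longrightarrow> alpha x < 0 \<Longrightarrow> EE \<phi> x = 0"
  using gradedD[of \<phi> x] by (intro Rep_ex_inject[THEN iffD1]) (auto simp: Rep_EE zero_ex.rep_eq Ecan_comp_def gzero_def)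

lemma EE_hom: "graded \<phi> \<Longrightarrow> alpha x \<ge> 0 \<Longrightarrow> ehom (nat (alpha x)) (EE \<phi> x)"
  using gradedD[of \<phi> x] unfolding ehom_def by (auto simp: Rep_EE Ecan_comp_def)

lemma EE_fin: "graded \<phi> \<Longrightarrow> finite {S. Rep_ex (EE \<phi> x) S \<noteq> 0}"
  using gradedD[of \<phi> x] by (auto simp: Rep_EE Ecan_comp_def gzero_def grass_def split: if_splits)

lemma ev_Cons: "ev \<phi> (x # w) = EE \<phi> x * ev \<phi> w" by (simp add: ev_def)
lemma ev_append: "ev \<phi> (u @ v) = ev \<phi> u * ev \<phi> v" by (simp add: ev_def)
lemma ev_Nil: "ev \<phi> [] = 1" by (simp add: ev_def)

definition RR :: "'a::field fpoly set \<Rightarrow> var list \<Rightarrow> int \<Rightarrow> var list \<Rightarrow> bool" where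
  "RR I w c m \<longleftrightarrow> psub (wmon w) (psmult (of_int c) (wmon m)) \<in> I \<and>
     (\<forall>\<phi> :: var \<Rightarrow> 'a grass. graded \<phi> \<longrightarrow> ev \<phi> w = of_int c * ev \<phi> m)"

lemma RR_prefix:
  fixes I :: "'a::field fpoly set"
  assumes "pideal I" "RR I w c m"
  shows "RR I (y # w) c (y # m)"
proof -
  have "pmul (wmon [y]) (psub (wmon w) (psmult (of_int c) (wmon m))) = (psub (wmon (y # w)) (psmult (of_int c) (wmon (y # m))) :: 'a fpoly)"
    by (simp add: pmul_psub_right pmul_psmult_right pmul_wmon)
  moreover have "pmul (wmon [y]) (psub (wmon w) (psmult (of_int c) (wmon m))) \<in> I"
    using assms by (auto simp: RR_def intro!: pideal_mulL fpoly_wmon)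
  moreover have "ev \<phi> (y # w) = of_int c * ev \<phi> (y # m)" if "graded \<phi>" for \<phi> :: "var \<Rightarrow> 'a grass"
  proof -
    have h: "ev \<phi> w = of_int c * ev \<phi> m" using assms(2) that unfolding RR_def by blast
    have "ev \<phi> (y # w) = EE \<phi> y * of_int c * ev \<phi> m" by (simp add: ev_Cons h mult.assoc)
    also have "\<dots> = of_int c * (EE \<phi> y * ev \<phi> m)" by (simp add: mult_of_int_commute mult.assoc)
    finally show ?thesis by (simp add: ev_Cons)
  qed
  ultimately show ?thesis by (simp add: RR_def)
qed

lemma RR_suffix:
  fixes I :: "'a::field fpoly set"
  assumes "pideal I" "RR I w c m"
  shows "RR I (w @ r) c (m @ r)"
proof -
  have "pmul (psub (wmon w) (psmult (of_int c) (wmon m))) (wmon r) = (psub (wmon (w @ r)) (psmult (of_int c) (wmon (m @ r))) :: 'a fpoly)"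
    by (simp add: pmul_psub_left pmul_psmult_left pmul_wmon)
  moreover have "pmul (psub (wmon w) (psmult (of_int c) (wmon m))) (wmon r) \<in> I"
    using assms by (auto simp: RR_def intro!: pideal_mulR fpoly_wmon)
  moreover have "ev \<phi> (w @ r) = of_int c * ev \<phi> (m @ r)" if "graded \<phi>" for \<phi> :: "var \<Rightarrow> 'a grass"
  proof -
    have h: "ev \<phi> w = of_int c * ev \<phi> m" using assms(2) that unfolding RR_def by blast
    show ?thesis by (simp add: ev_append h mult.assoc)
  qed
  ultimately show ?thesis by (simp add: RR_def)
qed

lemma RR_trans:
  fixes I :: "'a::field fpoly set"
  assumes "pideal I" "RR I w c1 u" "RR I u c2 m"
  shows "RR I w (c1 * c2) m"
proof -
  have "(psub (wmon w) (psmult (of_int (c1 * c2)) (wmon m)) :: 'a fpoly) =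
     padd (psub (wmon w) (psmult (of_int c1) (wmon u))) (psmult (of_int c1) (psub (wmon u) (psmult (of_int c2) (wmon m))))"
    by (simp add: psub_def padd_def psmult_def fun_eq_iff algebra_simps)
  moreover have "\<dots> \<in> I" using assms
    by (auto simp: RR_def intro!: pideal_padd pideal_psmult)
  moreover have "ev \<phi> w = of_int (c1 * c2) * ev \<phi> m" if "graded \<phi>" for \<phi> :: "var \<Rightarrow> 'a grass"
  proof -
    have h1: "ev \<phi> w = of_int c1 * ev \<phi> u" using assms(2) that unfolding RR_def by blast
    have h2: "ev \<phi> u = of_int c2 * ev \<phi> m" using assms(3) that unfolding RR_def by blast
    show ?thesis by (simp add: h1 h2 mult.assoc)
  qed
  ultimately show ?thesis by (simp add: RR_def)
qed

lemma RR_zero: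
  fixes I :: "'a::field fpoly set"
  assumes "wmon w \<in> I" "\<And>\<phi> :: var \<Rightarrow> 'a::field grass. graded \<phi> \<Longrightarrow> ev \<phi> w = 0"
  shows "RR I w 0 m"
proof -
  have "psub (wmon w) (psmult (of_int 0) (wmon m)) = (wmon w :: 'a fpoly)"
    by (simp add: psub_def psmult_def fun_eq_iff)
  then show ?thesis using assms unfolding RR_def by simp
qed

lemma RR_refl: "pideal I \<Longrightarrow> RR I w 1 w"
  by (simp add: RR_def psub_def psmult_def pideal_zero[unfolded pzero_def])

definition adm :: "nat \<Rightarrow> var list \<Rightarrow> bool" where
  "adm p m \<longleftrightarrow> (\<forall>z\<in>set m. alpha z \<ge> 0 \<and> (odd (alpha z) \<longrightarrow> count (mset m) z \<le> 1)
      \<and> (even (alpha z) \<and> alpha z \<ge> 1 \<longrightarrow> count (mset m) z < p))"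

definition normal :: "nat \<Rightarrow> var list \<Rightarrow> bool" where
  "normal p m \<longleftrightarrow> sorted m \<and> adm p m"

lemma sorted_min_split:
  assumes "sorted m" "\<forall>z\<in>set m. x \<le> z"
  shows "m = replicate (count (mset m) x) x @ filter (\<lambda>z. z \<noteq> x) m"
  using assms
proof (induction m)
  case (Cons z m)
  show ?case
  proof (cases "z = x")
    case True then show ?thesis using Cons by simp
  next
    case False
    then have "x < z" using Cons.prems by auto
    then have "x \<notin> set m" using Cons.prems by fastforce
    then have "filter (\<lambda>z. z \<noteq> x) m = m" by (auto intro: filter_True)
    then show ?thesis using False \<open>x \<notin> set m\<close> by (simp add: count_mset_0_iff)
  qed
qed simp


lemma adm_tl: "adm p (y # m) \<Longrightarrow> adm p m"
  unfolding adm_def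
proof (intro ballI)
  fix z assume A: "\<forall>z\<in>set (y # m). 0 \<le> alpha z \<and> (odd (alpha z) \<longrightarrow> count (mset (y # m)) z \<le> 1) \<and>
      (even (alpha z) \<and> 1 \<le> alpha z \<longrightarrow> count (mset (y # m)) z < p)" and z: "z \<in> set m"
  have "count (mset m) z \<le> count (mset (y # m)) z" by simp
  then show "0 \<le> alpha z \<and> (odd (alpha z) \<longrightarrow> count (mset m) z \<le> 1) \<and>
      (even (alpha z) \<and> 1 \<le> alpha z \<longrightarrow> count (mset m) z < p)"
    using A z by fastforce
qed

lemma admD: "adm p m \<Longrightarrow> z \<in> set m \<Longrightarrow> 0 \<le> alpha z \<and> (odd (alpha z) \<longrightarrow> count (mset m) z \<le> 1) \<and>
      (even (alpha z) \<and> 1 \<le> alpha z \<longrightarrow> count (mset m) z < p)"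
  unfolding adm_def by blast

lemma normal_tl: "normal p (y # m) \<Longrightarrow> normal p m"
  unfolding normal_def using adm_tl[of p y m] by simp

context
  fixes I :: "'a::field fpoly set" and p :: nat
  assumes TI: "TZ_ideal I" and G: "Ecan_gens p \<subseteq> I" and ch: "CHAR('a) = p"
    and pr: "prime p" and p2: "p > 2"
begin

lemma PI: "pideal I" using TI by (simp add: TZ_ideal_def)

lemma two: "(2::'a) \<noteq> 0"
proof
  assume "(2::'a) = 0"
  then have "of_nat 2 = (0::'a)" by simp
  then have "p dvd 2" using ch of_nat_eq_0_iff_char_dvd by metis
  then show False using p2 by (simp add: dvd_imp_le leD)
qed

lemma pz: "of_nat p = (0::'a)" using ch of_nat_CHAR by metis

lemma neg_in: "alpha x < 0 \<Longrightarrow> (wmon [x] :: 'a fpoly) \<in> I"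
proof -
  assume "alpha x < 0"
  then have "(pvar x :: 'a fpoly) \<in> Ecan_gens p" unfolding Ecan_gens_def by blast
  then show ?thesis using G by (auto simp: pvar_wmon)
qed

lemma comm_in: "x \<noteq> y \<Longrightarrow> even (alpha x) \<or> even (alpha y) \<Longrightarrow> (psub (wmon [x, y]) (wmon [y, x]) :: 'a fpoly) \<in> I"
proof -
  assume "x \<noteq> y" "even (alpha x) \<or> even (alpha y)"
  then have "(pcomm (pvar x) (pvar y) :: 'a fpoly) \<in> {pcomm (pvar x1) (pvar x2) | x1 x2. x1 \<noteq> x2 \<and> (even (alpha x1) \<or> even (alpha x2))}"
    by blast
  then have "(pcomm (pvar x) (pvar y) :: 'a fpoly) \<in> Ecan_gens p" unfolding Ecan_gens_def by blast
  then show ?thesis using G by (auto simp: pvar_wmon pcomm_def pmul_wmon)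
qed

lemma anti_in: "x \<noteq> y \<Longrightarrow> odd (alpha x) \<Longrightarrow> odd (alpha y) \<Longrightarrow> (padd (wmon [x, y]) (wmon [y, x]) :: 'a fpoly) \<in> I"
proof -
  assume "x \<noteq> y" "odd (alpha x)" "odd (alpha y)"
  then have "(padd (pmul (pvar x) (pvar y)) (pmul (pvar y) (pvar x)) :: 'a fpoly) \<in> {padd (pmul (pvar x1) (pvar x2)) (pmul (pvar x2) (pvar x1)) | x1 x2.
        x1 \<noteq> x2 \<and> odd (alpha x1) \<and> odd (alpha x2)}"
    by blast
  then have "(padd (pmul (pvar x) (pvar y)) (pmul (pvar y) (pvar x)) :: 'a fpoly) \<in> Ecan_gens p" unfolding Ecan_gens_def by blast
  then show ?thesis using G by (auto simp: pvar_wmon pmul_wmon)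
qed

lemma pow_in: "even (alpha x) \<Longrightarrow> alpha x \<ge> 1 \<Longrightarrow> (wmon (replicate p x) :: 'a fpoly) \<in> I"
proof -
  assume "even (alpha x)" "alpha x \<ge> 1"
  then have "(ppow (pvar x) p :: 'a fpoly) \<in> Ecan_gens p" unfolding Ecan_gens_def by blast
  then show ?thesis using G by (auto simp: pvar_wmon ppow_wmon)
qed

lemma RR_neg: "alpha x < 0 \<Longrightarrow> RR I (x # w) 0 m"
proof (rule RR_zero)
  assume a: "alpha x < 0"
  have "pmul (wmon [x]) (wmon w) \<in> I" by (rule pideal_mulR[OF PI neg_in[OF a] fpoly_wmon])
  then show "wmon (x # w) \<in> I" by (simp add: pmul_wmon)
  fix \<phi> :: "var \<Rightarrow> 'a grass" assume "graded \<phi>"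
  then show "ev \<phi> (x # w) = 0" using a by (simp add: ev_Cons EE_neg)
qed

lemma EE_sq: "graded \<phi> \<Longrightarrow> odd (alpha x) \<Longrightarrow> EE \<phi> x * EE \<phi> x = (0 :: 'a ex)"
proof (cases "alpha x < 0")
  case True
  assume "graded \<phi>" then show ?thesis using True by (simp add: EE_neg)
next
  case False
  assume g: "graded \<phi>" and o: "odd (alpha x)"
  have "odd (nat (alpha x))" using o False by (simp add: even_nat_iff)
  then show ?thesis using odd_sq_zero[OF EE_hom[OF g] _ two] False by simp
qed

lemma RR_oddsq: "odd (alpha x) \<Longrightarrow> RR I (x # x # w) 0 m"
proof (rule RR_zero)
  assume a: "odd (alpha x)"
  have "pmul (wmon [x, x]) (wmon w) \<in> I" by (rule pideal_mulR[OF PI odd_sq_in[OF TI G a two] fpoly_wmon])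
  then show "wmon (x # x # w) \<in> I" by (simp add: pmul_wmon)
  fix \<phi> :: "var \<Rightarrow> 'a grass" assume "graded \<phi>"
  then show "ev \<phi> (x # x # w) = 0" using a EE_sq by (simp add: ev_Cons mult.assoc[symmetric])
qed

lemma RR_pow: "even (alpha x) \<Longrightarrow> alpha x \<ge> 1 \<Longrightarrow> RR I (replicate p x @ w) 0 m"
proof (rule RR_zero)
  assume a: "even (alpha x)" "alpha x \<ge> 1"
  have "pmul (wmon (replicate p x)) (wmon w) \<in> I" by (rule pideal_mulR[OF PI pow_in[OF a] fpoly_wmon])
  then show "wmon (replicate p x @ w) \<in> I" by (simp add: pmul_wmon)
  fix \<phi> :: "var \<Rightarrow> 'a grass" assume g: "graded \<phi>"
  have "even (nat (alpha x))" "nat (alpha x) > 0" using a by (auto simp: even_nat_iff)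
  then have "EE \<phi> x ^ p = 0"
    using even_pow_zero[OF EE_hom[OF g] _ _ EE_fin[OF g] pz] a p2 by simp
  then show "ev \<phi> (replicate p x @ w) = 0" by (simp add: ev_append ev_def)
qed

lemma RR_swap:
  assumes "x \<noteq> y" "alpha x \<ge> 0" "alpha y \<ge> 0"
  shows "RR I (x # y # w) (if odd (alpha x) \<and> odd (alpha y) then -1 else 1) (y # x # w)"
proof -
  let ?e = "if odd (alpha x) \<and> odd (alpha y) then -1 else (1::int)"
  have A: "psub (wmon [x, y]) (psmult (of_int ?e) (wmon [y, x])) \<in> I"
  proof (cases "odd (alpha x) \<and> odd (alpha y)")
    case True
    have X: "psub (wmon [x, y]) (psmult (of_int ?e) (wmon [y, x])) = (padd (wmon [x, y]) (wmon [y, x]) :: 'a fpoly)"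
      by (simp only: if_P[OF True]) (simp add: psub_def padd_def psmult_def fun_eq_iff)
    have Y: "(padd (wmon [x, y]) (wmon [y, x]) :: 'a fpoly) \<in> I" using anti_in assms True by simp
    show ?thesis using X Y by (simp only:)
  next
    case False
    have X: "psub (wmon [x, y]) (psmult (of_int ?e) (wmon [y, x])) = (psub (wmon [x, y]) (wmon [y, x]) :: 'a fpoly)"
      by (simp only: if_not_P[OF False]) (simp add: psub_def psmult_def fun_eq_iff)
    have Y: "(psub (wmon [x, y]) (wmon [y, x]) :: 'a fpoly) \<in> I" using comm_in assms False by simp
    show ?thesis using X Y by (simp only:)
  qed
  have B: "ev \<phi> [x, y] = of_int ?e * ev \<phi> [y, x]" if g: "graded \<phi>" for \<phi> :: "var \<Rightarrow> 'a grass"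
  proof -
    have "EE \<phi> x * EE \<phi> y = of_int ((-1) ^ (nat (alpha x) * nat (alpha y))) * (EE \<phi> y * EE \<phi> x)"
      by (rule graded_comm[OF EE_hom[OF g assms(2)] EE_hom[OF g assms(3)]])
    moreover have "(-1::int) ^ (nat (alpha x) * nat (alpha y)) = ?e"
      using assms by (simp add: minus_one_power_iff even_nat_iff)
    ultimately show ?thesis by (simp add: ev_def)
  qed
  have "RR I [x, y] ?e [y, x]" using A B by (simp add: RR_def)
  from RR_suffix[OF PI this, of w] show ?thesis by simp
qed

definition PP :: "var list \<Rightarrow> int \<Rightarrow> var list \<Rightarrow> bool" where
  "PP w c m \<longleftrightarrow> RR I w c m \<and> (c \<noteq> 0 \<longrightarrow> normal p m \<and> mset m = mset w)"

lemma ins: "normal p m \<Longrightarrow> \<exists>c m'. PP (x # m) c m'"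
proof (induction m)
  case Nil
  show ?case
  proof (cases "alpha x < 0")
    case True
    have "PP [x] 0 []" using RR_neg[of x "[]" "[]"] True by (simp add: PP_def)
    then show ?thesis by blast
  next
    case False
    have "normal p [x]" using False p2 by (simp add: normal_def adm_def)
    then have "PP [x] 1 [x]" using RR_refl[OF PI] by (simp add: PP_def)
    then show ?thesis by blast
  qed
next
  case (Cons y m1)
  have n1: "normal p m1" using normal_tl Cons.prems by blast
  have sy: "sorted (y # m1)" and ay: "adm p (y # m1)" using Cons.prems by (auto simp: normal_def)
  have ya: "alpha y \<ge> 0" using ay by (simp add: adm_def)
  show ?case
  proof (cases "alpha x < 0")
    case True
    have "PP (x # y # m1) 0 []" using RR_neg[of x "y # m1" "[]"] True by (simp add: PP_def)
    then show ?thesis by blast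
  next
    case xa: False
    show ?thesis
    proof (cases "x \<le> y")
      case le: True
      have sx: "sorted (x # y # m1)" using le sy by auto
      show ?thesis
      proof (cases "x = y \<and> odd (alpha x)")
        case True
        then have xy: "x = y" and o: "odd (alpha y)" by auto
        have "RR I (x # y # m1) 0 []" using RR_oddsq[OF o, of m1 "[]"] xy by simp
        then have "PP (x # y # m1) 0 []" by (simp add: PP_def)
        then show ?thesis by blast
      next
        case notodd: False
        show ?thesis
        proof (cases "even (alpha x) \<and> alpha x \<ge> 1 \<and> count (mset (y # m1)) x = p - 1")
          case True
          have allx: "\<forall>z\<in>set (x # y # m1). x \<le> z" using sx by auto
          have "x # y # m1 = replicate (count (mset (x # y # m1)) x) x @ filter (\<lambda>z. z \<noteq> x) (x # y # m1)"
            by (rule sorted_min_split[OF sx allx])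
          also have "count (mset (x # y # m1)) x = p" using True p2 by simp
          finally have e: "x # y # m1 = replicate p x @ filter (\<lambda>z. z \<noteq> x) (x # y # m1)" .
          have "RR I (x # y # m1) 0 []" using RR_pow[of x "filter (\<lambda>z. z \<noteq> x) (x # y # m1)" "[]"] True
            by (subst e) simp
          then show ?thesis by (auto simp: PP_def)
        next
          case False
          have "normal p (x # y # m1)"
            unfolding normal_def
          proof
            show "sorted (x # y # m1)" by (rule sx)
            show "adm p (x # y # m1)" unfolding adm_def
            proof
              fix z assume z: "z \<in> set (x # y # m1)"
              show "0 \<le> alpha z \<and> (odd (alpha z) \<longrightarrow> count (mset (x # y # m1)) z \<le> 1) \<and>
                  (even (alpha z) \<and> 1 \<le> alpha z \<longrightarrow> count (mset (x # y # m1)) z < p)"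
              proof (cases "z = x")
                case False
                then have zin: "z \<in> set (y # m1)" using z by simp
                have eqc: "count (mset (x # y # m1)) z = count (mset (y # m1)) z" using False by simp
                show ?thesis unfolding eqc by (rule admD[OF ay zin])
              next
                case True
                have c1: "x \<in> set (y # m1) \<Longrightarrow> x = y" using le sy by fastforce
                have c2: "x \<in> set (y # m1) \<Longrightarrow> even (alpha x) \<and> 1 \<le> alpha x \<Longrightarrow> count (mset (y # m1)) x < p"
                  using ay unfolding adm_def by blast
                have c3: "x \<notin> set (y # m1) \<Longrightarrow> count (mset (y # m1)) x = 0" by (metis count_mset_0_iff)
                show ?thesis using True xa notodd False c1 c2 c3 p2
                  by (cases "x \<in> set (y # m1)") auto
              qed
            qed
          qed
          then have "PP (x # y # m1) 1 (x # y # m1)" using RR_refl[OF PI] by (simp add: PP_def)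
          then show ?thesis by blast
        qed
      qed
    next
      case gt: False
      obtain c1 m2 where IH: "PP (x # m1) c1 m2" using Cons.IH[OF n1] by blast
      let ?e = "if odd (alpha x) \<and> odd (alpha y) then -1 else (1::int)"
      have xy: "x \<noteq> y" using gt by auto
      have R: "RR I (x # y # m1) (?e * c1) (y # m2)"
        by (rule RR_trans[OF PI RR_swap[OF xy _ ya] RR_prefix[OF PI]]) (use xa IH in \<open>auto simp: PP_def\<close>)
      have "?e * c1 \<noteq> 0 \<longrightarrow> normal p (y # m2) \<and> mset (y # m2) = mset (x # y # m1)"
      proof
        assume "?e * c1 \<noteq> 0"
        then have "c1 \<noteq> 0" by auto
        then have n2: "normal p m2" and ms: "mset m2 = mset (x # m1)" using IH by (auto simp: PP_def)
        have ms2: "mset (y # m2) = mset (x # y # m1)" using ms by simp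
        have st: "set m2 = set (x # m1)" by (metis ms set_mset_mset)
        have "sorted (y # m2)" using n2 st sy gt by (auto simp: normal_def)
        moreover have "adm p (y # m2)" unfolding adm_def
        proof
          fix z assume z: "z \<in> set (y # m2)"
          show "0 \<le> alpha z \<and> (odd (alpha z) \<longrightarrow> count (mset (y # m2)) z \<le> 1) \<and>
              (even (alpha z) \<and> 1 \<le> alpha z \<longrightarrow> count (mset (y # m2)) z < p)"
          proof (cases "z = y")
            case True
            have "count (mset (y # m2)) z = count (mset (y # m1)) z" using ms2 True xy by simp
            then show ?thesis using ay True unfolding adm_def by simp
          next
            case False
            then have "z \<in> set m2" using z by simp
            moreover have "count (mset (y # m2)) z = count (mset m2) z" using False by simp
            ultimately show ?thesis using n2 unfolding normal_def adm_def by simp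
          qed
        qed
        ultimately show "normal p (y # m2) \<and> mset (y # m2) = mset (x # y # m1)"
          using ms2 by (simp add: normal_def)
      qed
      then have "PP (x # y # m1) (?e * c1) (y # m2)" using R by (simp add: PP_def)
      then show ?thesis by blast
    qed
  qed
qed

lemma claimA: "\<exists>c m. PP w c m"
proof (induction w)
  case Nil
  have "normal p []" by (simp add: normal_def adm_def)
  then have "PP [] 1 []" using RR_refl[OF PI] by (simp add: PP_def)
  then show ?case by blast
next
  case (Cons x w)
  obtain c m where cm: "PP w c m" using Cons.IH by blast
  show ?case
  proof (cases "c = 0")
    case True
    have "RR I (x # w) 0 []"
    proof (rule RR_zero)
      have "psub (wmon w) (psmult (of_int 0) (wmon m)) \<in> I" using cm True by (simp add: PP_def RR_def)
      moreover have "psub (wmon w) (psmult (of_int 0) (wmon m)) = (wmon w :: 'a fpoly)"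
        by (simp add: psub_def psmult_def fun_eq_iff)
      ultimately have "wmon w \<in> I" by simp
      then have "pmul (wmon [x]) (wmon w) \<in> I" by (rule pideal_mulL[OF PI _ fpoly_wmon])
      then show "wmon (x # w) \<in> I" by (simp add: pmul_wmon)
    next
      fix \<phi> :: "var \<Rightarrow> 'a grass" assume "graded \<phi>"
      then have "ev \<phi> w = 0" using cm True by (simp add: PP_def RR_def)
      then show "ev \<phi> (x # w) = 0" by (simp add: ev_Cons)
    qed
    then show ?thesis by (auto simp: PP_def)
  next
    case False
    then have n: "normal p m" and ms: "mset m = mset w" and R1: "RR I w c m" using cm by (auto simp: PP_def)
    obtain c' m' where P2: "PP (x # m) c' m'" using ins[OF n] by blast
    have R: "RR I (x # w) (c * c') m'"
      by (rule RR_trans[OF PI RR_prefix[OF PI R1]]) (use P2 in \<open>simp add: PP_def\<close>)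
    have "c * c' \<noteq> 0 \<longrightarrow> normal p m' \<and> mset m' = mset (x # w)"
      using P2 ms by (auto simp: PP_def)
    then have "PP (x # w) (c * c') m'" using R by (simp add: PP_def)
    then show ?thesis by blast
  qed
qed

end


lemma univ_zero:
  fixes a :: "nat \<Rightarrow> 'a::field"
  assumes inf: "infinite (UNIV :: 'a set)" and N: "finite N"
    and z: "\<And>s. (\<Sum>n\<in>N. a n * s ^ n) = 0"
  shows "\<forall>n\<in>N. a n = 0"
proof -
  define P where "P = (\<Sum>n\<in>N. monom (a n) n)"
  have ev: "poly P s = (\<Sum>n\<in>N. a n * s ^ n)" for s by (simp add: P_def poly_sum poly_monom)
  have "P = 0"
  proof (rule ccontr)
    assume "P \<noteq> 0"
    then have "finite {s. poly P s = 0}" by (rule poly_roots_finite)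
    moreover have "{s. poly P s = 0} = UNIV" using ev z by auto
    ultimately show False using inf by simp
  qed
  show ?thesis
  proof
    fix n assume n: "n \<in> N"
    have "coeff P n = (\<Sum>m\<in>N. if m = n then a m else 0)" by (simp add: P_def coeff_sum)
    also have "\<dots> = a n" using n N by (simp add: sum.delta)
    finally show "a n = 0" using \<open>P = 0\<close> by simp
  qed
qed

lemma multi_zero:
  fixes c :: "('v \<Rightarrow> nat) \<Rightarrow> 'a::field"
  assumes inf: "infinite (UNIV :: 'a set)" and Z: "finite Z"
  shows "finite K \<Longrightarrow> (\<forall>e\<in>K. \<forall>z. z \<notin> Z \<longrightarrow> e z = 0) \<Longrightarrow>
     (\<forall>t. (\<Sum>e\<in>K. c e * (\<Prod>z\<in>Z. t z ^ e z)) = 0) \<Longrightarrow> \<forall>e\<in>K. c e = 0"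
  using Z
proof (induction Z arbitrary: K c rule: finite_induct)
  case empty
  show ?case
  proof
    fix e assume e: "e \<in> K"
    have K: "K \<subseteq> {\<lambda>z. 0}" using empty.prems(2) by auto
    then have "K = {e}" using e by auto
    then have "e = (\<lambda>z. 0)" using K by auto
    then show "c e = 0" using empty.prems(3) \<open>K = {e}\<close> by simp
  qed
next
  case (insert z Z)
  define N where "N = (\<lambda>e. e z) ` K"
  have fN: "finite N" using insert.prems(1) by (simp add: N_def)
  define g where "g n t = (\<Sum>e\<in>{e\<in>K. e z = n}. c e * (\<Prod>z'\<in>Z. t z' ^ e z'))" for n t
  have split: "(\<Sum>e\<in>K. c e * (\<Prod>z'\<in>insert z Z. t z' ^ e z')) = (\<Sum>n\<in>N. g n t * t z ^ n)" for t
  proof -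
    have "(\<Sum>e\<in>K. c e * (\<Prod>z'\<in>insert z Z. t z' ^ e z')) = (\<Sum>e\<in>K. c e * (\<Prod>z'\<in>Z. t z' ^ e z') * t z ^ e z)"
      using insert.hyps by (simp add: algebra_simps)
    also have "\<dots> = (\<Sum>n\<in>N. \<Sum>e\<in>{e\<in>K. e z = n}. c e * (\<Prod>z'\<in>Z. t z' ^ e z') * t z ^ e z)"
      unfolding N_def by (rule sum.image_gen[OF insert.prems(1)])
    also have "\<dots> = (\<Sum>n\<in>N. g n t * t z ^ n)"
      unfolding g_def sum_distrib_right by (rule sum.cong) auto
    finally show ?thesis .
  qed
  have gz: "g n t = 0" if n: "n \<in> N" for n t
  proof -
    have pz: "(\<Prod>z'\<in>Z. (t(z := s)) z' ^ e z') = (\<Prod>z'\<in>Z. t z' ^ e z')" for s and e :: "'v \<Rightarrow> nat"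
    proof (rule prod.cong[OF refl])
      fix z' assume "z' \<in> Z"
      then have "z' \<noteq> z" using insert.hyps by auto
      then show "(t(z := s)) z' ^ e z' = t z' ^ e z'" by simp
    qed
    have gs: "g m (t(z := s)) = g m t" for m s
      unfolding g_def pz ..
    have "\<forall>n\<in>N. g n t = 0"
    proof (rule univ_zero[OF inf fN, of "\<lambda>n. g n t"])
      fix s
      have "(\<Sum>n\<in>N. g n (t(z := s)) * (t(z := s)) z ^ n) = 0" using split insert.prems(3) by metis
      then show "(\<Sum>n\<in>N. g n t * s ^ n) = 0" by (simp add: gs)
    qed
    then show ?thesis using n by blast
  qed
  show ?case
  proof
    fix e assume e: "e \<in> K"
    define n where "n = e z"
    have nN: "n \<in> N" using e by (simp add: N_def n_def)
    define K' where "K' = (\<lambda>e. e(z := 0)) ` {e\<in>K. e z = n}"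
    define c' where "c' e' = c (e'(z := n))" for e'
    have inj: "inj_on (\<lambda>e. e(z := 0)) {e\<in>K. e z = n}"
    proof (rule inj_onI)
      fix a b assume "a \<in> {e\<in>K. e z = n}" "b \<in> {e\<in>K. e z = n}" "a(z := 0) = b(z := 0)"
      then have ab: "a z = b z" and eq: "a(z := 0) = b(z := 0)" by auto
      show "a = b"
      proof (rule ext)
        fix x show "a x = b x" using fun_cong[OF eq, of x] ab by (cases "x = z") auto
      qed
    qed
    have "\<forall>e'\<in>K'. c' e' = 0"
    proof (rule insert.IH)
      show "finite K'" using insert.prems(1) by (simp add: K'_def)
      show "\<forall>e\<in>K'. \<forall>z'. z' \<notin> Z \<longrightarrow> e z' = 0" using insert.prems(2) by (auto simp: K'_def)
      show "\<forall>t. (\<Sum>e\<in>K'. c' e * (\<Prod>z'\<in>Z. t z' ^ e z')) = 0"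
      proof
        fix t
        have "(\<Sum>e\<in>K'. c' e * (\<Prod>z'\<in>Z. t z' ^ e z')) = (\<Sum>e\<in>{e\<in>K. e z = n}. c' (e(z := 0)) * (\<Prod>z'\<in>Z. t z' ^ (e(z := 0)) z'))"
          unfolding K'_def sum.reindex[OF inj] comp_def ..
        also have "\<dots> = g n t"
          unfolding g_def c'_def
        proof (rule sum.cong[OF refl])
          fix e assume e: "e \<in> {e\<in>K. e z = n}"
          have 1: "e(z := 0, z := n) = e" using e by auto
          have 2: "(\<Prod>z'\<in>Z. t z' ^ (e(z := 0)) z') = (\<Prod>z'\<in>Z. t z' ^ e z')"
          proof (rule prod.cong[OF refl])
            fix z' assume "z' \<in> Z"
            then have "z' \<noteq> z" using insert.hyps by auto
            then show "t z' ^ (e(z := 0)) z' = t z' ^ e z'" by simp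
          qed
          show "c (e(z := 0, z := n)) * (\<Prod>z'\<in>Z. t z' ^ (e(z := 0)) z') = c e * (\<Prod>z'\<in>Z. t z' ^ e z')"
            unfolding 1 2 ..
        qed
        also have "\<dots> = 0" by (rule gz[OF nN])
        finally show "(\<Sum>e\<in>K'. c' e * (\<Prod>z'\<in>Z. t z' ^ e z')) = 0" .
      qed
    qed
    moreover have "e(z := 0) \<in> K'" using e by (auto simp: K'_def n_def)
    ultimately have "c' (e(z := 0)) = 0" by blast
    then show "c e = 0" by (simp add: c'_def n_def)
  qed
qed


section \<open>Scalars and monomials in E\<close>

lemma Rep_emon0_mult: "Rep_ex (emon {} c * z) = (\<lambda>S. c * Rep_ex z S)"
proof (rule ext)
  fix U
  show "Rep_ex (emon {} c * z) U = c * Rep_ex z U"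
  proof (cases "finite U")
    case True
    have "Rep_ex (emon {} c * z) U = (\<Sum>S\<in>Pow U. of_int (gsign S (U - S)) * (if S = {} then c else 0) * Rep_ex z (U - S))"
      using True by (simp add: times_ex.rep_eq gmul_def emon.rep_eq)
    also have "\<dots> = (\<Sum>S\<in>Pow U. if S = {} then c * Rep_ex z U else 0)"
      by (rule sum.cong) auto
    also have "\<dots> = c * Rep_ex z U" using True by (simp add: sum.delta)
    finally show ?thesis .
  qed (simp add: Rep_ex_inf)
qed

lemma emon0_comm: "emon {} c * z = z * emon {} c"
proof -
  have "ehom 0 (emon {} c)" using ehom_emon[of "{}" c] by simp
  moreover have "ehom (card {S. False}) z \<or> True" by simp
  have "\<forall>S. Rep_ex z S \<noteq> 0 \<longrightarrow> True" by simp
  show ?thesis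
  proof (rule Rep_ex_inject[THEN iffD1], rule ext)
    fix U
    show "Rep_ex (emon {} c * z) U = Rep_ex (z * emon {} c) U"
    proof (cases "finite U")
      case True
      have "Rep_ex (z * emon {} c) U = (\<Sum>S\<in>Pow U. of_int (gsign S (U - S)) * Rep_ex z S * (if U - S = {} then c else 0))"
        using True by (simp add: times_ex.rep_eq gmul_def emon.rep_eq)
      also have "\<dots> = (\<Sum>S\<in>Pow U. if S = U then c * Rep_ex z U else 0)"
        by (rule sum.cong) auto
      also have "\<dots> = c * Rep_ex z U" using True by (simp add: sum.delta)
      finally show ?thesis by (simp add: Rep_emon0_mult)
    qed (simp add: Rep_ex_inf)
  qed
qed

lemma emon0_mult: "emon {} c * emon {} d = emon {} (c * d)"
  by (simp add: emon_mult)

lemma one_emon: "1 = emon {} (1::'a::field)"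
  by (rule Rep_ex_inject[THEN iffD1]) (simp add: one_ex.rep_eq emon.rep_eq gone_def fun_eq_iff)

lemma of_nat_emon: "of_nat n * emon S c = emon S (of_nat n * c)"
proof -
  have "Rep_ex (of_nat n * emon S c) = Rep_ex (of_int (int n) * emon S c)" by simp
  also have "\<dots> = (\<lambda>U. of_int (int n) * Rep_ex (emon S c) U)" by (rule Rep_of_int_mult)
  also have "\<dots> = Rep_ex (emon S (of_nat n * c))"
    by (simp add: emon.rep_eq fun_eq_iff)
  finally show ?thesis using Rep_ex_inject by blast
qed

lemma gsign_nz: "(of_int (gsign S T) :: 'a::field) \<noteq> 0"
  by (simp add: gsign_def)

lemma emon_list:
  assumes "\<forall>S\<in>set Ss. finite S" "sorted_wrt (\<lambda>S T. S \<inter> T = {}) Ss"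
  shows "\<exists>c. c \<noteq> 0 \<and> prod_list (map (\<lambda>S. emon S 1) Ss) = emon (\<Union>(set Ss)) (c::'a::field)"
  using assms
proof (induction Ss)
  case Nil then show ?case by (intro exI[of _ 1]) (simp add: one_emon[symmetric])
next
  case (Cons S Ss)
  obtain c where c: "c \<noteq> 0" "prod_list (map (\<lambda>S. emon S 1) Ss) = emon (\<Union>(set Ss)) (c::'a)"
    using Cons by auto
  have fS: "finite S" "finite (\<Union>(set Ss))" using Cons.prems by auto
  have d: "S \<inter> \<Union>(set Ss) = {}" using Cons.prems by auto
  have "prod_list (map (\<lambda>S. emon S 1) (S # Ss)) = emon S 1 * emon (\<Union>(set Ss)) c" using c by simp
  also have "\<dots> = emon (S \<union> \<Union>(set Ss)) (of_int (gsign S (\<Union>(set Ss))) * 1 * c)"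
    using emon_mult[OF fS, of 1 c] d by simp
  finally show ?case using c gsign_nz by (intro exI[of _ "of_int (gsign S (\<Union>(set Ss))) * 1 * c"]) auto
qed

lemma emon_mult_disj:
  assumes "finite S" "finite T" "S \<inter> T = {}" "c \<noteq> 0" "d \<noteq> 0"
  shows "\<exists>e. e \<noteq> 0 \<and> emon S c * emon T d = emon (S \<union> T) (e::'a::field)"
proof -
  have "(of_int (gsign S T) :: 'a) \<noteq> 0" by (simp add: gsign_def)
  then show ?thesis using emon_mult[OF assms(1,2), of c d] assms(3-5)
    by (intro exI[of _ "of_int (gsign S T) * c * d"]) auto
qed

section \<open>Evaluations\<close>

lemma ehom_one: "ehom 0 (1::'a::field ex)"
  by (simp add: ehom_def one_ex.rep_eq gone_def)

lemma ehom_ev: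
  assumes g: "graded \<phi>" and w: "\<forall>x\<in>set w. alpha x \<ge> 0"
  shows "ehom (sum_list (map (\<lambda>x. nat (alpha x)) w)) (ev \<phi> w)"
  using w
proof (induction w)
  case Nil then show ?case by (simp add: ev_Nil ehom_one)
next
  case (Cons x w)
  then show ?case using ehom_mult[OF EE_hom[OF g] Cons.IH] by (simp add: ev_Cons)
qed

lemma ev_nz:
  assumes g: "graded \<phi>" and nz: "Rep_ex (ev \<phi> (y # w)) U \<noteq> 0"
  shows "\<exists>S. S \<subseteq> U \<and> \<phi> y S \<noteq> 0 \<and> Rep_ex (ev \<phi> w) (U - S) \<noteq> 0"
proof -
  have "gmul (\<phi> y) (Rep_ex (ev \<phi> w)) U \<noteq> 0"
    using nz by (simp add: ev_Cons times_ex.rep_eq Rep_EE[OF g])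
  from gmul_nz[OF this] show ?thesis by blast
qed


lemma Rep_sum: "finite F \<Longrightarrow> Rep_ex (sum f F) U = (\<Sum>S\<in>F. Rep_ex (f S) U)"
  by (induction F rule: finite_induct) (auto simp: zero_ex.rep_eq plus_ex.rep_eq)

definition gen :: "var \<Rightarrow> nat \<Rightarrow> nat \<Rightarrow> nat" where
  "gen x j i = to_nat (x, j, i)"

definition Bk :: "var \<Rightarrow> nat \<Rightarrow> nat set" where
  "Bk x j = gen x j ` {..<nat (alpha x)}"

definition Bl :: "(var \<Rightarrow> nat) \<Rightarrow> var \<Rightarrow> nat set" where
  "Bl k x = (\<Union>j<k x. Bk x j)"

definition phi :: "(var \<Rightarrow> nat) \<Rightarrow> (var \<Rightarrow> 'a) \<Rightarrow> var \<Rightarrow> 'a::field grass" where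
  "phi k t x = (if alpha x = 0 then (\<lambda>S. if S = {} then t x else 0)
     else if alpha x > 0 then (\<lambda>S. if \<exists>j<k x. S = Bk x j then 1 else 0) else gzero)"

lemma gen_eq: "gen x j i = gen y j' i' \<longleftrightarrow> x = y \<and> j = j' \<and> i = i'"
  by (simp add: gen_def)

lemma finite_Bk: "finite (Bk x j)" by (simp add: Bk_def)

lemma card_Bk: "card (Bk x j) = nat (alpha x)"
  unfolding Bk_def by (subst card_image) (auto simp: inj_on_def gen_eq)

lemma Bk_ne: "alpha x > 0 \<Longrightarrow> Bk x j \<noteq> {}"
proof -
  assume "alpha x > 0"
  then have "gen x j 0 \<in> Bk x j" by (simp add: Bk_def)
  then show ?thesis by blast
qed

lemma Bk_disj: "(x, j) \<noteq> (y, j') \<Longrightarrow> Bk x j \<inter> Bk y j' = {}"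
  by (auto simp: Bk_def gen_eq)

lemma Bk_inj: "alpha x > 0 \<Longrightarrow> Bk x j = Bk x j' \<longleftrightarrow> j = j'"
  using Bk_disj[of x j x j'] Bk_ne[of x j] by auto

lemma finite_Bl: "finite (Bl k x)" by (simp add: Bl_def finite_Bk)

lemma card_Bl: "card (Bl k x) = k x * nat (alpha x)"
proof -
  have "card (Bl k x) = (\<Sum>j<k x. card (Bk x j))"
    unfolding Bl_def by (rule card_UN_disjoint) (auto simp: finite_Bk Bk_disj)
  then show ?thesis by (simp add: card_Bk)
qed

lemma Bl_disj: "x \<noteq> y \<Longrightarrow> Bl k x \<inter> Bl k y = {}"
proof -
  assume xy: "x \<noteq> y"
  have False if "a \<in> Bk x j" "a \<in> Bk y j'" for a j j'
    using Bk_disj[of x j y j'] xy that by auto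
  then show ?thesis by (auto simp: Bl_def)
qed

lemma graded_phi: "graded (phi k t)"
  unfolding graded_def
proof
  fix x
  show "phi k t x \<in> Ecan_comp (alpha x)"
  proof (cases "alpha x < 0")
    case True then show ?thesis by (simp add: phi_def Ecan_comp_def)
  next
    case False
    have sub: "{S. phi k t x S \<noteq> 0} \<subseteq> insert {} (Bk x ` {..<k x})"
      by (auto simp: phi_def gzero_def split: if_splits)
    have fin: "finite {S. phi k t x S \<noteq> 0}" by (rule finite_subset[OF sub]) auto
    have "phi k t x S \<noteq> 0 \<Longrightarrow> finite S \<and> card S = nat (alpha x)" for S
      using False by (auto simp: phi_def card_Bk finite_Bk gzero_def split: if_splits)
    then show ?thesis using False fin by (simp add: Ecan_comp_def grass_def)
  qed
qed

lemma EE_phi0: "alpha x = 0 \<Longrightarrow> EE (phi k t) x = emon {} (t x)"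
  by (rule Rep_ex_inject[THEN iffD1]) (simp add: Rep_EE[OF graded_phi] emon.rep_eq phi_def fun_eq_iff)

lemma EE_phipos: "alpha x > 0 \<Longrightarrow> EE (phi k t) x = (\<Sum>j<k x. emon (Bk x j) 1)"
proof (rule Rep_ex_inject[THEN iffD1], rule ext)
  fix S assume a: "alpha x > 0"
  have "Rep_ex (\<Sum>j<k x. emon (Bk x j) 1) S = (\<Sum>j<k x. if S = Bk x j then 1 else 0)"
    by (simp add: Rep_sum emon.rep_eq finite_Bk)
  also have "\<dots> = (if \<exists>j<k x. S = Bk x j then 1 else (0::'a))"
  proof (cases "\<exists>j<k x. S = Bk x j")
    case True
    then obtain j where j: "j < k x" "S = Bk x j" by auto
    have "(\<Sum>j'<k x. if S = Bk x j' then 1 else (0::'a)) = (\<Sum>j'<k x. if j' = j then 1 else 0)"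
      using j Bk_inj[OF a] by (intro sum.cong) auto
    also have "\<dots> = 1" using j by simp
    finally show ?thesis using True by simp
  qed auto
  also have "\<dots> = Rep_ex (EE (phi k t) x) S"
    using a by (simp add: Rep_EE[OF graded_phi] phi_def)
  finally show "Rep_ex (EE (phi k t) x) S = Rep_ex (\<Sum>j<k x. emon (Bk x j) 1) S" by simp
qed

lemma ev_indep: "\<forall>x\<in>set w. alpha x \<noteq> 0 \<Longrightarrow> ev (phi k t) w = ev (phi k t') w"
proof -
  assume "\<forall>x\<in>set w. alpha x \<noteq> 0"
  then have "map (EE (phi k t)) w = map (EE (phi k t')) w"
    by (intro map_cong refl) (auto simp: EE_def phi_def)
  then show ?thesis unfolding ev_def by (rule arg_cong[where f=prod_list])
qed

lemma ev_split:
  "\<forall>x\<in>set w. alpha x \<ge> 0 \<Longrightarrow>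
   ev (phi k t) w = emon {} (prod_list (map t (filter (\<lambda>x. alpha x = 0) w))) * ev (phi k t) (filter (\<lambda>x. alpha x \<noteq> 0) w)"
proof (induction w)
  case Nil then show ?case by (simp add: ev_Nil one_emon emon0_mult)
next
  case (Cons x w)
  then have IH: "ev (phi k t) w = emon {} (prod_list (map t (filter (\<lambda>x. alpha x = 0) w))) * ev (phi k t) (filter (\<lambda>x. alpha x \<noteq> 0) w)"
    by simp
  show ?case
  proof (cases "alpha x = 0")
    case True
    then show ?thesis by (simp add: ev_Cons IH EE_phi0 mult.assoc[symmetric] emon0_mult)
  next
    case False
    have "ev (phi k t) (x # w) = EE (phi k t) x * (emon {} (prod_list (map t (filter (\<lambda>x. alpha x = 0) w))) * ev (phi k t) (filter (\<lambda>x. alpha x \<noteq> 0) w))"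
      by (simp add: ev_Cons IH)
    also have "\<dots> = emon {} (prod_list (map t (filter (\<lambda>x. alpha x = 0) w))) * (EE (phi k t) x * ev (phi k t) (filter (\<lambda>x. alpha x \<noteq> 0) w))"
    proof -
      have c: "EE (phi k t) x * emon {} (prod_list (map t (filter (\<lambda>x. alpha x = 0) w))) = emon {} (prod_list (map t (filter (\<lambda>x. alpha x = 0) w))) * EE (phi k t) x"
        by (rule emon0_comm[symmetric])
      show ?thesis by (simp only: mult.assoc[symmetric] c)
    qed
    finally show ?thesis using False by (simp add: ev_Cons)
  qed
qed

lemma block_bound:
  assumes a: "alpha x > 0"
  shows "Rep_ex (ev (phi k t) w) U \<noteq> 0 \<Longrightarrow> card (U \<inter> Bl k x) \<le> count (mset w) x * nat (alpha x)"
proof (induction w arbitrary: U)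
  case Nil
  then have "U = {}" by (simp add: ev_Nil one_ex.rep_eq gone_def split: if_splits)
  then show ?case by simp
next
  case (Cons y w)
  obtain S where S: "S \<subseteq> U" "phi k t y S \<noteq> 0" "Rep_ex (ev (phi k t) w) (U - S) \<noteq> 0"
    using ev_nz[OF graded_phi Cons.prems] by blast
  have IH: "card ((U - S) \<inter> Bl k x) \<le> count (mset w) x * nat (alpha x)" using Cons.IH S(3) .
  have e: "U \<inter> Bl k x = (S \<inter> Bl k x) \<union> ((U - S) \<inter> Bl k x)" using S(1) by auto
  have cS: "card (S \<inter> Bl k x) \<le> (if y = x then nat (alpha x) else 0)"
  proof (cases "alpha y = 0")
    case True
    then have "S = {}" using S(2) by (simp add: phi_def split: if_splits)
    then show ?thesis by simp
  next
    case False
    have ypos: "alpha y > 0" using S(2) False by (auto simp: phi_def gzero_def split: if_splits)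
    then obtain j where j: "S = Bk y j" using S(2) False by (auto simp: phi_def split: if_splits)
    show ?thesis
    proof (cases "y = x")
      case True
      have "card (S \<inter> Bl k x) \<le> card S" by (rule card_mono) (auto simp: j finite_Bk)
      then show ?thesis using True j card_Bk by simp
    next
      case False
      have "S \<inter> Bl k x = {}" using False j Bk_disj[of y j x] by (auto simp: Bl_def)
      then show ?thesis by simp
    qed
  qed
  have "card (U \<inter> Bl k x) \<le> card (S \<inter> Bl k x) + card ((U - S) \<inter> Bl k x)"
    unfolding e by (rule card_Un_le)
  then show ?case using IH cS by (auto split: if_splits)
qed

lemma card_ev_nz:
  assumes "\<forall>x\<in>set w. alpha x \<ge> 0" "Rep_ex (ev (phi k t) w) U \<noteq> 0"
  shows "card U = sum_list (map (\<lambda>x. nat (alpha x)) w)"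
  using ehom_ev[OF graded_phi[of k t] assms(1)] assms(2) by (simp add: ehom_def)


lemma V_lemma:
  fixes k :: "var \<Rightarrow> nat" and t :: "var \<Rightarrow> 'a::field"
  assumes pr: "prime p" and ch: "CHAR('a) = p"
  shows "sorted w \<Longrightarrow> (\<forall>x\<in>set w. alpha x > 0 \<and> count (mset w) x = k x \<and> k x < p \<and> (odd (alpha x) \<longrightarrow> k x \<le> 1))
    \<Longrightarrow> \<exists>c. c \<noteq> 0 \<and> ev (phi k t) w = emon (\<Union>x\<in>set w. Bl k x) (c::'a)"
proof (induction "length w" arbitrary: w rule: less_induct)
  case less
  show ?case
  proof (cases w)
    case Nil then show ?thesis by (intro exI[of _ 1]) (simp add: ev_Nil one_emon[symmetric])
  next
    case (Cons x w')
    have allx: "\<forall>z\<in>set w. x \<le> z" using less.prems(1) Cons by auto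
    define c where "c = count (mset w) x"
    define r where "r = filter (\<lambda>z. z \<noteq> x) w"
    have wsplit: "w = replicate c x @ r" using sorted_min_split[OF less.prems(1) allx] by (simp add: c_def r_def)
    have xin: "x \<in> set w" using Cons by simp
    have hx: "alpha x > 0" "c = k x" "k x < p" "odd (alpha x) \<longrightarrow> k x \<le> 1"
      using less.prems(2) xin c_def by auto
    have c0: "c > 0" using xin by (simp add: c_def)
    have lr: "length r < length w" unfolding r_def using xin by (simp add: length_filter_less)
    have sr: "sorted r" unfolding r_def using less.prems(1) by (simp add: sorted_wrt_filter)
    have pr_r: "\<forall>z\<in>set r. alpha z > 0 \<and> count (mset r) z = k z \<and> k z < p \<and> (odd (alpha z) \<longrightarrow> k z \<le> 1)"
      using less.prems(2) by (auto simp: r_def)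
    obtain c2 where c2: "c2 \<noteq> 0" "ev (phi k t) r = emon (\<Union>z\<in>set r. Bl k z) c2"
      using less.hyps[OF lr sr pr_r] by blast
    define m where "m j = emon (Bk x j) (1::'a)" for j
    have EEx: "EE (phi k t) x = (\<Sum>j<c. m j)" using EE_phipos[OF hx(1)] hx(2) by (simp add: m_def)
    have comm: "m i * m j = m j * m i" if "i < c" "j < c" for i j
    proof (cases "i = j")
      case True then show ?thesis by simp
    next
      case False
      then have "c \<ge> 2" using that by auto
      then have evx: "even (alpha x)" using hx by auto
      have "m i * m j = of_int ((-1) ^ (card (Bk x i) * card (Bk x j))) * (m j * m i)"
        unfolding m_def by (rule graded_comm[OF ehom_emon ehom_emon])
      also have "(-1::int) ^ (card (Bk x i) * card (Bk x j)) = 1"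
        using evx hx(1) by (simp add: card_Bk minus_one_power_iff even_nat_iff)
      finally show ?thesis by simp
    qed
    have sq: "m i * m i = 0" if "i < c" for i
      unfolding m_def by (rule emon_sq[OF finite_Bk Bk_ne[OF hx(1)]])
    have pw: "(\<Sum>j<c. m j) ^ c = of_nat (fact c) * prod_list (map m [0..<c])"
      using sum_pow_fact[of c m] comm sq by blast
    have pm: "prod_list (map m [0..<c]) = prod_list (map (\<lambda>S. emon S 1) (map (Bk x) [0..<c]))"
      unfolding map_map comp_def m_def ..
    have sw: "sorted_wrt (\<lambda>S T. S \<inter> T = {}) (map (Bk x) [0..<c])"
      unfolding sorted_wrt_map
    proof (rule sorted_wrt_mono_rel[OF _ sorted_wrt_upt])
      fix a b :: nat assume "a < b"
      then show "Bk x a \<inter> Bk x b = {}" by (intro Bk_disj) auto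
    qed
    obtain c1 where c1: "c1 \<noteq> 0" "prod_list (map (\<lambda>S. emon S 1) (map (Bk x) [0..<c])) = emon (\<Union>(set (map (Bk x) [0..<c]))) (c1::'a)"
      using emon_list[OF _ sw] finite_Bk by auto
    have U1: "\<Union>(set (map (Bk x) [0..<c])) = Bl k x" by (auto simp: Bl_def hx(2))
    have fnz: "(of_nat (fact c) :: 'a) \<noteq> 0"
    proof
      assume "(of_nat (fact c) :: 'a) = 0"
      then have "p dvd fact c" using ch of_nat_eq_0_iff_char_dvd by metis
      then show False using prime_dvd_fact_iff[OF pr] hx(2,3) by simp
    qed
    have P1: "EE (phi k t) x ^ c = emon (Bl k x) (of_nat (fact c) * c1)"
      unfolding EEx pw pm c1(2) U1 by (rule of_nat_emon)
    have "x \<notin> set r" by (simp add: r_def)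
    have dz: "Bl k x \<inter> Bl k z = {}" if "z \<in> set r" for z
      using that \<open>x \<notin> set r\<close> by (intro Bl_disj) auto
    have disj: "Bl k x \<inter> (\<Union>z\<in>set r. Bl k z) = {}" using dz by blast
    have fin: "finite (\<Union>z\<in>set r. Bl k z)" by (simp add: finite_Bl)
    have nz1: "of_nat (fact c) * c1 \<noteq> 0" using fnz c1(1) by simp
    obtain e where e: "e \<noteq> 0" "emon (Bl k x) (of_nat (fact c) * c1) * emon (\<Union>z\<in>set r. Bl k z) c2 = emon (Bl k x \<union> (\<Union>z\<in>set r. Bl k z)) (e::'a)"
      using emon_mult_disj[OF finite_Bl fin disj nz1 c2(1)] by blast
    have "ev (phi k t) w = EE (phi k t) x ^ c * ev (phi k t) r"
      by (subst wsplit) (simp add: ev_append ev_def)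
    also have "\<dots> = emon (Bl k x \<union> (\<Union>z\<in>set r. Bl k z)) e" using P1 c2(2) e(2) by simp
    also have "Bl k x \<union> (\<Union>z\<in>set r. Bl k z) = (\<Union>z\<in>set w. Bl k z)"
    proof -
      have "set w = insert x (set r)"
      proof -
        have "set w = set (replicate c x) \<union> set r" by (subst wsplit) simp
        also have "set (replicate c x) = {x}" using c0 by simp
        finally show ?thesis by simp
      qed
      then show ?thesis by simp
    qed
    finally show ?thesis using e(1) by blast
  qed
qed


lemma prod_list_count:
  fixes t :: "'v \<Rightarrow> 'a::comm_monoid_mult"
  assumes "finite Z" "set xs \<subseteq> Z"
  shows "prod_list (map t xs) = (\<Prod>z\<in>Z. t z ^ count (mset xs) z)"
  using assms(2)
proof (induction xs)
  case Nil then show ?case by simp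
next
  case (Cons x xs)
  have xZ: "x \<in> Z" using Cons.prems by simp
  have IH: "prod_list (map t xs) = (\<Prod>z\<in>Z. t z ^ count (mset xs) z)" using Cons by simp
  have "(\<Prod>z\<in>Z. t z ^ count (mset (x # xs)) z) = (\<Prod>z\<in>Z. (if z = x then t z else 1) * t z ^ count (mset xs) z)"
    by (rule prod.cong) auto
  also have "\<dots> = (\<Prod>z\<in>Z. if z = x then t z else 1) * (\<Prod>z\<in>Z. t z ^ count (mset xs) z)"
    by (rule prod.distrib)
  also have "(\<Prod>z\<in>Z. if z = x then t z else 1) = t x" using xZ assms(1) by (simp add: prod.delta)
  finally show ?case using IH by simp
qed

lemma sorted_mset_eq: "sorted xs \<Longrightarrow> sorted ys \<Longrightarrow> mset xs = mset ys \<Longrightarrow> xs = ys"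
  by (metis properties_for_sort)

lemma claimB:
  fixes M :: "var list set" and d :: "var list \<Rightarrow> 'a::field" and p :: nat
  assumes inf: "infinite (UNIV::'a set)" and ch: "CHAR('a) = p" and pr: "prime p"
    and fM: "finite M" and nM: "\<forall>m\<in>M. normal p m"
    and Z: "\<And>(\<phi> :: var \<Rightarrow> 'a grass) U. graded \<phi> \<Longrightarrow> (\<Sum>m\<in>M. d m * Rep_ex (ev \<phi> m) U) = 0"
  shows "\<forall>m\<in>M. d m = 0"
proof
  fix m0 assume m0: "m0 \<in> M"
  have p2: "p \<ge> 2" using pr by (simp add: prime_ge_2_nat)
  define k where "k x = count (mset m0) x" for x
  define w0 where "w0 = filter (\<lambda>x. alpha x \<noteq> 0) m0"
  define U0 where "U0 = (\<Union>x\<in>set w0. Bl k x)"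
  define t0 :: "var \<Rightarrow> 'a" where "t0 = (\<lambda>x. 0)"
  define V where "V = Rep_ex (ev (phi k t0) w0) U0"
  have nm: "sorted m" "adm p m" if "m \<in> M" for m using nM that by (auto simp: normal_def)
  have nonneg: "alpha x \<ge> 0" if "m \<in> M" "x \<in> set m" for m x using nm(2)[OF that(1)] that(2) by (simp add: adm_def)
  have sw0: "sorted w0" unfolding w0_def using nm(1)[OF m0] by (simp add: sorted_wrt_filter)
  have hw0: "\<forall>x\<in>set w0. alpha x > 0 \<and> count (mset w0) x = k x \<and> k x < p \<and> (odd (alpha x) \<longrightarrow> k x \<le> 1)"
  proof
    fix x assume x: "x \<in> set w0"
    then have xm: "x \<in> set m0" and a0: "alpha x \<noteq> 0" by (auto simp: w0_def)
    have ax: "alpha x > 0" using nonneg[OF m0 xm] a0 by simp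
    have A: "odd (alpha x) \<longrightarrow> k x \<le> 1" "even (alpha x) \<and> 1 \<le> alpha x \<longrightarrow> k x < p"
      using admD[OF nm(2)[OF m0] xm] by (auto simp: k_def)
    have "k x < p" using A ax p2 by (cases "odd (alpha x)") auto
    then show "alpha x > 0 \<and> count (mset w0) x = k x \<and> k x < p \<and> (odd (alpha x) \<longrightarrow> k x \<le> 1)"
      using ax A a0 by (simp add: w0_def k_def)
  qed
  obtain cV where cV: "cV \<noteq> 0" "ev (phi k t0) w0 = emon U0 cV"
    using V_lemma[OF pr ch sw0 hw0, of t0] by (auto simp: U0_def)
  have fU0: "finite U0" by (simp add: U0_def finite_Bl)
  have V: "V = cV" using fU0 by (simp add: V_def cV(2) emon.rep_eq)
  have key: "Rep_ex (ev (phi k t) m) U0 = (if filter (\<lambda>x. alpha x \<noteq> 0) m = w0 then prod_list (map t (filter (\<lambda>x. alpha x = 0) m)) * V else 0)"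
    if mM: "m \<in> M" for m t
  proof -
    let ?wm = "filter (\<lambda>x. alpha x \<noteq> 0) m"
    have nn: "\<forall>x\<in>set m. alpha x \<ge> 0" using nonneg[OF mM] by blast
    have "Rep_ex (ev (phi k t) m) U0 = prod_list (map t (filter (\<lambda>x. alpha x = 0) m)) * Rep_ex (ev (phi k t) ?wm) U0"
      by (simp add: ev_split[OF nn] Rep_emon0_mult)
    also have "ev (phi k t) ?wm = ev (phi k t0) ?wm" by (rule ev_indep) simp
    finally have E: "Rep_ex (ev (phi k t) m) U0 = prod_list (map t (filter (\<lambda>x. alpha x = 0) m)) * Rep_ex (ev (phi k t0) ?wm) U0" .
    show ?thesis
    proof (cases "?wm = w0")
      case True then show ?thesis using E by (simp add: V_def)
    next
      case False
      have "Rep_ex (ev (phi k t0) ?wm) U0 = 0"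
      proof (rule ccontr)
        assume nz: "Rep_ex (ev (phi k t0) ?wm) U0 \<noteq> 0"
        let ?a = "\<lambda>x. nat (alpha x)"
        define Y where "Y = set ?wm \<union> set w0"
        have fY: "finite Y" by (simp add: Y_def)
        have posY: "alpha x > 0" if "x \<in> Y" for x
        proof -
          from that have "(x \<in> set m \<and> alpha x \<noteq> 0) \<or> (x \<in> set m0 \<and> alpha x \<noteq> 0)"
            by (auto simp: Y_def w0_def)
          then show ?thesis using nonneg[OF mM, of x] nonneg[OF m0, of x] by auto
        qed
        have c1: "card U0 = sum_list (map ?a ?wm)"
          by (rule card_ev_nz[OF _ nz]) (use nn in auto)
        have c2: "card U0 = sum_list (map ?a w0)"
        proof -
          have "card U0 = (\<Sum>x\<in>set w0. card (Bl k x))"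
            unfolding U0_def by (rule card_UN_disjoint) (auto simp: finite_Bl Bl_disj)
          also have "\<dots> = (\<Sum>x\<in>set w0. count_list w0 x * ?a x)"
            using hw0 by (intro sum.cong refl) (simp add: card_Bl count_mset)
          also have "\<dots> = sum_list (map ?a w0)" by (simp add: sum_list_map_eq_sum_count)
          finally show ?thesis .
        qed
        have s1: "sum_list (map ?a ?wm) = (\<Sum>x\<in>Y. count_list ?wm x * ?a x)"
          by (rule sum_list_map_eq_sum_count2) (auto simp: Y_def)
        have s2: "sum_list (map ?a w0) = (\<Sum>x\<in>Y. count_list w0 x * ?a x)"
          by (rule sum_list_map_eq_sum_count2) (auto simp: Y_def)
        have le: "count_list w0 x * ?a x \<le> count_list ?wm x * ?a x" if "x \<in> Y" for x
        proof (cases "x \<in> set w0")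
          case True
          have ax: "alpha x > 0" using hw0 True by auto
          have bb: "card (U0 \<inter> Bl k x) \<le> count (mset ?wm) x * ?a x"
            by (rule block_bound[OF ax nz])
          have ub: "U0 \<inter> Bl k x = Bl k x" using True by (auto simp: U0_def)
          have A: "k x * ?a x \<le> count (mset ?wm) x * ?a x" using bb unfolding ub card_Bl .
          have B: "count (mset ?wm) x = count_list ?wm x" by (rule count_mset)
          have C: "count_list w0 x = k x" using hw0 True by (simp add: count_mset)
          show ?thesis using A unfolding B C .
        next
          case False
          then have "count_list w0 x = 0" by (simp add: count_list_0_iff)
          then show ?thesis by simp
        qed
        have eqc: "count_list w0 x = count_list ?wm x" for x
        proof (cases "x \<in> Y")
          case True
          have "count_list w0 x * ?a x = count_list ?wm x * ?a x"
            by (rule sum_mono_inv[OF _ le True fY]) (use c1 c2 s1 s2 in simp)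
          moreover have "?a x > 0" using posY[OF True] by simp
          ultimately show ?thesis by simp
        next
          case False
          then show ?thesis by (simp add: Y_def count_list_0_iff)
        qed
        have "mset ?wm = mset w0" by (rule multiset_eqI) (simp only: count_mset eqc)
        moreover have "sorted ?wm" using nm(1)[OF mM] by (simp add: sorted_wrt_filter)
        ultimately have "?wm = w0" using sorted_mset_eq sw0 by blast
        then show False using False by simp
      qed
      then show ?thesis using E False by simp
    qed
  qed
  define M' where "M' = {m\<in>M. filter (\<lambda>x. alpha x \<noteq> 0) m = w0}"
  have fM': "finite M'" using fM by (simp add: M'_def)
  have m0M': "m0 \<in> M'" using m0 by (simp add: M'_def w0_def)
  define Zs where "Zs = (\<Union>m\<in>M. set (filter (\<lambda>x. alpha x = 0) m))"
  have fZs: "finite Zs" using fM by (simp add: Zs_def)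
  define E where "E m = (\<lambda>z. count (mset (filter (\<lambda>x. alpha x = 0) m)) z)" for m
  have PE: "prod_list (map t (filter (\<lambda>x. alpha x = 0) m)) = (\<Prod>z\<in>Zs. t z ^ E m z)" if "m \<in> M" for m t
    unfolding E_def by (rule prod_list_count[OF fZs]) (use that in \<open>auto simp: Zs_def\<close>)
  have sum0: "(\<Sum>m\<in>M'. d m * (\<Prod>z\<in>Zs. t z ^ E m z)) = 0" for t
  proof -
    have "0 = (\<Sum>m\<in>M. d m * Rep_ex (ev (phi k t) m) U0)" using Z[OF graded_phi] by simp
    also have "\<dots> = (\<Sum>m\<in>M. if m \<in> M' then d m * (\<Prod>z\<in>Zs. t z ^ E m z) * V else 0)"
      by (intro sum.cong refl) (auto simp: key PE M'_def)
    also have "\<dots> = (\<Sum>m\<in>M'. d m * (\<Prod>z\<in>Zs. t z ^ E m z) * V)"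
      using fM by (simp add: sum.If_cases M'_def Int_def)
    also have "\<dots> = (\<Sum>m\<in>M'. d m * (\<Prod>z\<in>Zs. t z ^ E m z)) * V"
      by (simp add: sum_distrib_right)
    finally show ?thesis using V cV(1) by simp
  qed
  have injE: "inj_on E M'"
  proof (rule inj_onI)
    fix m1 m2 assume m1: "m1 \<in> M'" and m2: "m2 \<in> M'" and e: "E m1 = E m2"
    have "count (mset m1) z = count (mset m2) z" for z
    proof (cases "alpha z = 0")
      case True
      have "count (mset (filter (\<lambda>x. alpha x = 0) m1)) z = count (mset (filter (\<lambda>x. alpha x = 0) m2)) z"
        using fun_cong[OF e, of z] unfolding E_def .
      then show ?thesis using True by simp
    next
      case False
      have "filter (\<lambda>x. alpha x \<noteq> 0) m1 = filter (\<lambda>x. alpha x \<noteq> 0) m2" using m1 m2 by (simp add: M'_def)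
      then have "count (mset (filter (\<lambda>x. alpha x \<noteq> 0) m1)) z = count (mset (filter (\<lambda>x. alpha x \<noteq> 0) m2)) z" by simp
      then show ?thesis using False by simp
    qed
    then have "mset m1 = mset m2" by (simp add: multiset_eq_iff)
    moreover have "sorted m1" "sorted m2" using m1 m2 nm by (auto simp: M'_def)
    ultimately show "m1 = m2" using sorted_mset_eq by blast
  qed
  define c where "c e = d (the_inv_into M' E e)" for e
  have "\<forall>e\<in>E ` M'. c e = 0"
  proof (rule multi_zero[OF inf fZs])
    show "finite (E ` M')" using fM' by simp
    show "\<forall>e\<in>E ` M'. \<forall>z. z \<notin> Zs \<longrightarrow> e z = 0"
      by (auto simp: E_def Zs_def M'_def count_mset_0_iff)
    show "\<forall>t. (\<Sum>e\<in>E ` M'. c e * (\<Prod>z\<in>Zs. t z ^ e z)) = 0"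
    proof
      fix t
      have "(\<Sum>e\<in>E ` M'. c e * (\<Prod>z\<in>Zs. t z ^ e z)) = (\<Sum>m\<in>M'. c (E m) * (\<Prod>z\<in>Zs. t z ^ E m z))"
        by (simp add: sum.reindex[OF injE])
      also have "\<dots> = (\<Sum>m\<in>M'. d m * (\<Prod>z\<in>Zs. t z ^ E m z))"
        by (intro sum.cong refl) (simp add: c_def the_inv_into_f_f[OF injE])
      finally show "(\<Sum>e\<in>E ` M'. c e * (\<Prod>z\<in>Zs. t z ^ e z)) = 0" using sum0 by simp
    qed
  qed
  then have "c (E m0) = 0" using m0M' by blast
  then show "d m0 = 0" by (simp add: c_def the_inv_into_f_f[OF injE m0M'])
qed


lemma sum_fun_apply: "(sum g A) u = (\<Sum>a\<in>A. g a u)"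
  by (induction A rule: infinite_finite_induct) auto

lemma pideal_sum:
  assumes "pideal I" "finite A" "\<forall>a\<in>A. g a \<in> I"
  shows "sum g A \<in> I"
  using assms(2,3)
proof (induction A rule: finite_induct)
  case empty
  have e: "sum g {} = pzero" by (simp add: pzero_def fun_eq_iff)
  show ?case unfolding e by (rule pideal_zero[OF assms(1)])
next
  case (insert a A)
  have "sum g (insert a A) = padd (g a) (sum g A)"
    using insert.hyps by (simp add: padd_def plus_fun_def)
  then show ?case using pideal_padd[OF assms(1)] insert by simp
qed

theorem mainTheorem2:
  fixes p :: nat
  assumes "infinite (UNIV :: 'a::field set)"
    and "CHAR('a) = p" and "prime p" and "p > 2"
  shows "{f :: 'a fpoly. Ecan_identity f} \<subseteq> TZ_gen (Ecan_gens p)"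
proof
  note inf = assms(1) and ch = assms(2) and pr = assms(3) and p2 = assms(4)
  fix f :: "'a fpoly" assume "f \<in> {f. Ecan_identity f}"
  then have fp: "fpoly f" and idf: "\<And>\<phi>. graded \<phi> \<Longrightarrow> peval \<phi> f = gzero"
    by (auto simp: Ecan_identity_def graded_def)
  show "f \<in> TZ_gen (Ecan_gens p)" unfolding TZ_gen_def
  proof (rule InterI)
    fix I :: "'a fpoly set" assume "I \<in> {I. TZ_ideal I \<and> Ecan_gens p \<subseteq> I}"
    then have TI: "TZ_ideal I" and G: "Ecan_gens p \<subseteq> I" by auto
    have PI: "pideal I" using TI by (simp add: TZ_ideal_def)
    have "\<forall>w. \<exists>c m. PP I p w c m" using claimA[OF TI G ch pr p2] by blast
    then obtain cf mf where cm: "\<And>w. PP I p w (cf w) (mf w)" by metis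
    note PPd = PP_def[OF TI G ch pr p2]
    have RRw: "RR I w (cf w) (mf w)" for w using cm[of w] by (simp add: PPd)
    have nw: "cf w \<noteq> 0 \<Longrightarrow> normal p (mf w)" for w using cm[of w] by (simp add: PPd)
    define W where "W = {w. f w \<noteq> 0}"
    have fW: "finite W" using fp by (simp add: fpoly_def W_def)
    define M where "M = mf ` {w\<in>W. cf w \<noteq> 0}"
    define d where "d m = (\<Sum>w\<in>{w\<in>W. cf w \<noteq> 0 \<and> mf w = m}. f w * of_int (cf w))" for m
    have fM: "finite M" using fW by (simp add: M_def)
    have nM: "\<forall>m\<in>M. normal p m" using nw by (auto simp: M_def)
    have Zs: "(\<Sum>m\<in>M. d m * Rep_ex (ev \<phi> m) U) = 0" if g: "graded \<phi>" for \<phi> :: "var \<Rightarrow> 'a grass" and U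
    proof -
      have ew: "Rep_ex (ev \<phi> w) U = of_int (cf w) * Rep_ex (ev \<phi> (mf w)) U" for w
      proof -
        have "ev \<phi> w = of_int (cf w) * ev \<phi> (mf w)" using RRw[of w] g unfolding RR_def by blast
        then show ?thesis by (simp add: Rep_of_int_mult)
      qed
      have "0 = peval \<phi> f U" using idf[OF g] by (simp add: gzero_def)
      also have "\<dots> = (\<Sum>w\<in>W. f w * Rep_ex (ev \<phi> w) U)"
        by (simp add: peval_def W_def Rep_ev[OF g])
      also have "\<dots> = (\<Sum>w\<in>W. if cf w \<noteq> 0 then f w * of_int (cf w) * Rep_ex (ev \<phi> (mf w)) U else 0)"
      proof (rule sum.cong[OF refl])
        fix w
        note e = ew[of w]
        show "f w * Rep_ex (ev \<phi> w) U = (if cf w \<noteq> 0 then f w * of_int (cf w) * Rep_ex (ev \<phi> (mf w)) U else 0)"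
          by (cases "cf w = 0") (simp_all add: e mult.assoc)
      qed
      also have "\<dots> = (\<Sum>w\<in>{w\<in>W. cf w \<noteq> 0}. f w * of_int (cf w) * Rep_ex (ev \<phi> (mf w)) U)"
        using fW by (simp add: sum.inter_filter)
      also have "\<dots> = (\<Sum>m\<in>M. \<Sum>w\<in>{w\<in>{w\<in>W. cf w \<noteq> 0}. mf w = m}. f w * of_int (cf w) * Rep_ex (ev \<phi> (mf w)) U)"
        unfolding M_def by (rule sum.image_gen) (use fW in simp)
      also have "\<dots> = (\<Sum>m\<in>M. d m * Rep_ex (ev \<phi> m) U)"
        unfolding d_def sum_distrib_right by (intro sum.cong refl) auto
      finally show ?thesis by simp
    qed
    have d0: "\<forall>m\<in>M. d m = 0" by (rule claimB[OF inf ch pr fM nM Zs])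
    define D where "D = (\<Sum>w\<in>W. psmult (f w) (psub (wmon w) (psmult (of_int (cf w)) (wmon (mf w)))))"
    have DI: "D \<in> I" unfolding D_def
    proof (rule pideal_sum[OF PI fW], rule ballI)
      fix w
      have "psub (wmon w) (psmult (of_int (cf w)) (wmon (mf w))) \<in> I" using RRw[of w] by (simp add: RR_def)
      then show "psmult (f w) (psub (wmon w) (psmult (of_int (cf w)) (wmon (mf w)))) \<in> I"
        by (rule pideal_psmult[OF PI])
    qed
    have "D = f"
    proof (rule ext)
      fix u
      have "D u = (\<Sum>w\<in>W. f w * wmon w u) - (\<Sum>w\<in>W. f w * of_int (cf w) * wmon (mf w) u)"
        by (simp add: D_def sum_fun_apply psmult_def psub_def algebra_simps sum_subtractf)
      also have "(\<Sum>w\<in>W. f w * wmon w u) = f u"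
      proof (cases "u \<in> W")
        case True
        have "(\<Sum>w\<in>W. f w * wmon w u) = (\<Sum>w\<in>W. if u = w then f w else 0)"
          by (intro sum.cong refl) (auto simp: wmon_def)
        also have "\<dots> = f u" using True fW by (simp add: sum.delta)
        finally show ?thesis .
      next
        case False
        then have "f u = 0" by (simp add: W_def)
        moreover have "(\<Sum>w\<in>W. f w * wmon w u) = 0"
          using False by (intro sum.neutral) (auto simp: wmon_def)
        ultimately show ?thesis by simp
      qed
      also have "(\<Sum>w\<in>W. f w * of_int (cf w) * wmon (mf w) u) = 0"
      proof -
        have "(\<Sum>w\<in>W. f w * of_int (cf w) * wmon (mf w) u) = (\<Sum>w\<in>W. if cf w \<noteq> 0 \<and> mf w = u then f w * of_int (cf w) else 0)"
          by (intro sum.cong refl) (auto simp: wmon_def)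
        also have "\<dots> = d u" unfolding d_def using fW by (simp add: sum.inter_filter)
        also have "d u = 0"
        proof (cases "{w\<in>W. cf w \<noteq> 0 \<and> mf w = u} = {}")
          case True then show ?thesis unfolding d_def True by simp
        next
          case False
          then have "u \<in> M" by (auto simp: M_def)
          then show ?thesis using d0 by blast
        qed
        finally show ?thesis .
      qed
      finally show "D u = f u" by simp
    qed
    then show "f \<in> I" using DI by simp
  qed
qed


end
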